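(* Let $\mathcal T$ be a tree grammar and let $\varphi(x_1,\ldots,x_\ell)$ be a quantifier-free type over the Simon vocabulary that is satisfied by some tuple of nodes in some tree of $\mathcal T$. There is a subset $X\subseteq\{x_1,\ldots,x_\ell\}$ such that: (1) for every $t\in\mathcal T$, any two tuples of nodes of $t$ satisfying $\varphi$ that agree on the variables in $X$ are equal; and (2) with $k=|X|$, the growth rate of $\varphi$, i.e. the function mapping $n\ge1$ to the maximal number of tuples satisfying $\varphi$ in a tree of $\mathcal T$ with at most $n$ nodes, is $\Theta(n^k)$.
   Context: Trees are finite, node-labelled, sibling-ordered. Simon representation: universe = nodes, a constant for the root, unary partial function parent (undefined at the root), unary label predicates, unary predicates “leftmost sibling” and “rightmost sibling”, binary relation sibling order (reflexive–transitive closure of sibling successor) and binary relation sibling successor; atomic formulas containing undefined terms are false. A tree grammar consists of a finite label set with a distinguished root label and rules of the forms $a\to$, $a\to b$, $a\to bc$, $a\to b^*$ (no children / one child labelled $b$ / two children labelled $b,c$ / any finite sequence of children labelled $b$), acyclic in the sense that some preorder makes the left-hand letter strictly bigger than all right-hand letters; $\mathcal T$ is the set of trees it generates. A quantifier-free type is a quantifier-free formula $\varphi(x_1,\ldots,x_\ell)$ such that every quantifier-free formula in the same free variables is either implied by $\varphi$ or inconsistent with it (over trees of $\mathcal T$). *)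

theory Defs
  imports Main "HOL-Library.Landau_Symbols"
begin

datatype 'a ltree = Nd 'a "'a ltree list"

fun root_lab :: "'a ltree \<Rightarrow> 'a" where
  "root_lab (Nd a ts) = a"

fun kids :: "'a ltree \<Rightarrow> 'a ltree list" where
  "kids (Nd a ts) = ts"

text \<open>Nodes are addressed by positions (Dewey paths): the root is [], and the
  i-th child (0-based) of node p is p @ [i].\<close>

function subt :: "'a ltree \<Rightarrow> nat list \<Rightarrow> 'a ltree option" where
  "subt t [] = Some t"
| "subt (Nd a ts) (i # p) = (if i < length ts then subt (ts ! i) p else None)"
  by pat_completeness auto
termination
  by (relation "measure (\<lambda>(t, p). size t)")
     (auto simp: less_Suc_eq_le intro!: size_list_estimation' nth_mem)

definition nodes :: "'a ltree \<Rightarrow> nat list set" where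
  "nodes t = {p. subt t p \<noteq> None}"

definition lab :: "'a ltree \<Rightarrow> nat list \<Rightarrow> 'a option" where
  "lab t p = map_option root_lab (subt t p)"

definition nchildren :: "'a ltree \<Rightarrow> nat list \<Rightarrow> nat" where
  "nchildren t p = (case subt t p of Some s \<Rightarrow> length (kids s) | None \<Rightarrow> 0)"

definition leftmost :: "'a ltree \<Rightarrow> nat list \<Rightarrow> bool" where
  "leftmost t p \<longleftrightarrow> p \<in> nodes t \<and> (p = [] \<or> last p = 0)"

definition rightmost :: "'a ltree \<Rightarrow> nat list \<Rightarrow> bool" where
  "rightmost t p \<longleftrightarrow> p \<in> nodes t \<and> (p = [] \<or> Suc (last p) = nchildren t (butlast p))"

definition sib_succ :: "'a ltree \<Rightarrow> nat list \<Rightarrow> nat list \<Rightarrow> bool" where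
  "sib_succ t p q \<longleftrightarrow> p \<in> nodes t \<and> q \<in> nodes t \<and> p \<noteq> [] \<and> q \<noteq> [] \<and>
     butlast p = butlast q \<and> last q = Suc (last p)"

text \<open>Sibling order = reflexive-transitive closure of sibling successor (on nodes).\<close>
definition sib_le :: "'a ltree \<Rightarrow> nat list \<Rightarrow> nat list \<Rightarrow> bool" where
  "sib_le t p q \<longleftrightarrow> p \<in> nodes t \<and> q \<in> nodes t \<and>
     (p = q \<or> (p \<noteq> [] \<and> q \<noteq> [] \<and> butlast p = butlast q \<and> last p \<le> last q))"

datatype trm = Var nat | Root | Par trm

datatype 'a qf =
    FTrue
  | Eq trm trm
  | Lab 'a trm
  | LeftM trm
  | RightM trm
  | SibLe trm trm
  | SibSucc trm trm
  | Neg "'a qf"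
  | Conj "'a qf" "'a qf"

fun trm_vars :: "trm \<Rightarrow> nat set" where
  "trm_vars (Var i) = {i}"
| "trm_vars Root = {}"
| "trm_vars (Par s) = trm_vars s"

fun qf_vars :: "'a qf \<Rightarrow> nat set" where
  "qf_vars FTrue = {}"
| "qf_vars (Eq s u) = trm_vars s \<union> trm_vars u"
| "qf_vars (Lab a s) = trm_vars s"
| "qf_vars (LeftM s) = trm_vars s"
| "qf_vars (RightM s) = trm_vars s"
| "qf_vars (SibLe s u) = trm_vars s \<union> trm_vars u"
| "qf_vars (SibSucc s u) = trm_vars s \<union> trm_vars u"
| "qf_vars (Neg f) = qf_vars f"
| "qf_vars (Conj f g) = qf_vars f \<union> qf_vars g"

text \<open>Term evaluation under an assignment vs (variable x_(i+1) is vs ! i);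
  None = undefined (parent of the root).\<close>
fun ev :: "nat list list \<Rightarrow> trm \<Rightarrow> nat list option" where
  "ev vs (Var i) = (if i < length vs then Some (vs ! i) else None)"
| "ev vs Root = Some []"
| "ev vs (Par s) = (case ev vs s of None \<Rightarrow> None
                     | Some p \<Rightarrow> if p = [] then None else Some (butlast p))"

fun ev2 :: "nat list list \<Rightarrow> trm \<Rightarrow> trm \<Rightarrow> (nat list \<Rightarrow> nat list \<Rightarrow> bool) \<Rightarrow> bool" where
  "ev2 vs s u R = (case (ev vs s, ev vs u) of (Some p, Some q) \<Rightarrow> R p q | _ \<Rightarrow> False)"

fun ev1 :: "nat list list \<Rightarrow> trm \<Rightarrow> (nat list \<Rightarrow> bool) \<Rightarrow> bool" where
  "ev1 vs s P = (case ev vs s of Some p \<Rightarrow> P p | None \<Rightarrow> False)"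

text \<open>Atomic formulas containing undefined terms are false.\<close>
fun sat :: "'a ltree \<Rightarrow> nat list list \<Rightarrow> 'a qf \<Rightarrow> bool" where
  "sat t vs FTrue = True"
| "sat t vs (Eq s u) = ev2 vs s u (\<lambda>p q. p = q)"
| "sat t vs (Lab a s) = ev1 vs s (\<lambda>p. lab t p = Some a)"
| "sat t vs (LeftM s) = ev1 vs s (leftmost t)"
| "sat t vs (RightM s) = ev1 vs s (rightmost t)"
| "sat t vs (SibLe s u) = ev2 vs s u (sib_le t)"
| "sat t vs (SibSucc s u) = ev2 vs s u (sib_succ t)"
| "sat t vs (Neg f) = (\<not> sat t vs f)"
| "sat t vs (Conj f g) = (sat t vs f \<and> sat t vs g)"

definition tuples :: "'a ltree \<Rightarrow> nat \<Rightarrow> nat list list set" where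
  "tuples t l = {vs. length vs = l \<and> set vs \<subseteq> nodes t}"

datatype 'a rule = Leaf 'a | Unary 'a 'a | Binary 'a 'a 'a | Star 'a 'a

fun lhs :: "'a rule \<Rightarrow> 'a" where
  "lhs (Leaf a) = a" | "lhs (Unary a b) = a" | "lhs (Binary a b c) = a" | "lhs (Star a b) = a"

fun rhs :: "'a rule \<Rightarrow> 'a set" where
  "rhs (Leaf a) = {}" | "rhs (Unary a b) = {b}" | "rhs (Binary a b c) = {b, c}" | "rhs (Star a b) = {b}"

definition tree_grammar :: "'a set \<Rightarrow> 'a \<Rightarrow> 'a rule set \<Rightarrow> bool" where
  "tree_grammar \<Sigma> r R \<longleftrightarrow> finite \<Sigma> \<and> r \<in> \<Sigma> \<and>
     (\<forall>\<rho>\<in>R. lhs \<rho> \<in> \<Sigma> \<and> rhs \<rho> \<subseteq> \<Sigma>) \<and>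
     (\<exists>le :: 'a \<Rightarrow> 'a \<Rightarrow> bool.
        (\<forall>a\<in>\<Sigma>. le a a) \<and> (\<forall>a\<in>\<Sigma>. \<forall>b\<in>\<Sigma>. \<forall>c\<in>\<Sigma>. le a b \<longrightarrow> le b c \<longrightarrow> le a c) \<and>
        (\<forall>\<rho>\<in>R. \<forall>b\<in>rhs \<rho>. le b (lhs \<rho>) \<and> \<not> le (lhs \<rho>) b))"

inductive gen :: "'a rule set \<Rightarrow> 'a ltree \<Rightarrow> bool" for R where
  gen_leaf: "Leaf a \<in> R \<Longrightarrow> gen R (Nd a [])"
| gen_unary: "Unary a b \<in> R \<Longrightarrow> gen R t \<Longrightarrow> root_lab t = b \<Longrightarrow> gen R (Nd a [t])"
| gen_binary: "Binary a b c \<in> R \<Longrightarrow> gen R t1 \<Longrightarrow> gen R t2 \<Longrightarrow> root_lab t1 = b \<Longrightarrow>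
     root_lab t2 = c \<Longrightarrow> gen R (Nd a [t1, t2])"
| gen_star: "Star a b \<in> R \<Longrightarrow> (\<forall>s\<in>set ts. gen R s \<and> root_lab s = b) \<Longrightarrow> gen R (Nd a ts)"

definition lang :: "'a rule set \<Rightarrow> 'a \<Rightarrow> 'a ltree set" where
  "lang R r = {t. gen R t \<and> root_lab t = r}"

definition qf_type :: "'a ltree set \<Rightarrow> nat \<Rightarrow> 'a qf \<Rightarrow> bool" where
  "qf_type T l \<phi> \<longleftrightarrow> qf_vars \<phi> \<subseteq> {..<l} \<and>
     (\<forall>\<psi>. qf_vars \<psi> \<subseteq> {..<l} \<longrightarrow>
        (\<forall>t\<in>T. \<forall>vs\<in>tuples t l. sat t vs \<phi> \<longrightarrow> sat t vs \<psi>) \<or>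
        (\<forall>t\<in>T. \<forall>vs\<in>tuples t l. \<not> (sat t vs \<phi> \<and> sat t vs \<psi>)))"

definition sols :: "'a ltree \<Rightarrow> nat \<Rightarrow> 'a qf \<Rightarrow> nat list list set" where
  "sols t l \<phi> = {vs \<in> tuples t l. sat t vs \<phi>}"

text \<open>Maximal number of satisfying tuples in a tree of T with at most n nodes
  (0 if there is no such tree).\<close>
definition growth :: "'a ltree set \<Rightarrow> nat \<Rightarrow> 'a qf \<Rightarrow> nat \<Rightarrow> nat" where
  "growth T l \<phi> n = Max (insert 0 {card (sols t l \<phi>) | t. t \<in> T \<and> card (nodes t) \<le> n})"

end

theory Submission
  imports Defs "HOL-Library.Sublist" "HOL-Library.List_Lexorder"
begin


lemma subt_append: "subt t (p @ q) = (case subt t p of None \<Rightarrow> None | Some s \<Rightarrow> subt s q)"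
proof (induction p arbitrary: t)
  case Nil then show ?case by simp
next
  case (Cons i p) then show ?case by (cases t) auto
qed

lemma nodes_Nd: "nodes (Nd a ts) = insert [] (\<Union>i\<in>{..<length ts}. (Cons i) ` nodes (ts!i))"
proof (rule set_eqI)
  fix q show "q \<in> nodes (Nd a ts) \<longleftrightarrow> q \<in> insert [] (\<Union>i\<in>{..<length ts}. (Cons i) ` nodes (ts!i))"
    by (cases q) (auto simp: nodes_def)
qed

lemma finite_nodes: "finite (nodes t)"
proof (induction t)
  case (Nd a ts) then show ?case by (simp add: nodes_Nd)
qed

fun nsz :: "'a ltree \<Rightarrow> nat" where
  "nsz (Nd a ts) = Suc (sum_list (map nsz ts))"

lemma card_nodes: "card (nodes t) = nsz t"
proof (induction t)
  case (Nd a ts)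
  have fin: "\<And>i. finite ((Cons i) ` nodes (ts!i))" using finite_nodes by auto
  have "card (\<Union>i\<in>{..<length ts}. (Cons i) ` nodes (ts!i)) = (\<Sum>i<length ts. card ((Cons i) ` nodes (ts!i)))"
    by (rule card_UN_disjoint) (auto simp: fin)
  also have "\<dots> = (\<Sum>i<length ts. nsz (ts!i))"
    by (rule sum.cong) (auto simp: card_image Nd)
  also have "\<dots> = sum_list (map nsz ts)"
    by (simp add: sum_list_sum_nth atLeast0LessThan)
  moreover have "[] \<notin> (\<Union>i\<in>{..<length ts}. (Cons i) ` nodes (ts!i))" by auto
  ultimately show ?case using fin by (simp add: nodes_Nd card_insert_disjoint)
qed

lemma nodes_empty_root: "[] \<in> nodes t" by (simp add: nodes_def)

lemma nodes_prefix: "q \<in> nodes t \<Longrightarrow> prefix p q \<Longrightarrow> p \<in> nodes t"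
  by (auto simp: nodes_def prefix_def subt_append split: option.splits)

lemma nodes_butlast: "q \<in> nodes t \<Longrightarrow> butlast q \<in> nodes t"
  by (metis nodes_prefix prefix_def append_butlast_last_id butlast.simps(1))


definition skel :: "nat list list \<Rightarrow> nat list set" where
  "skel ws = insert [] {q. \<exists>v\<in>set ws. prefix q v}"

lemma skel_prefix: "q \<in> skel ws \<Longrightarrow> prefix p q \<Longrightarrow> p \<in> skel ws"
  by (auto simp: skel_def intro: prefix_order.trans)

lemma skel_butlast: "q \<in> skel ws \<Longrightarrow> butlast q \<in> skel ws"
  by (erule skel_prefix) (simp add: prefix_def, metis append_butlast_last_id butlast.simps(1) append.right_neutral)

lemma skel_entry: "i < length ws \<Longrightarrow> ws ! i \<in> skel ws"
  by (auto simp: skel_def)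

lemma skel_nodes: "set ws \<subseteq> nodes t \<Longrightarrow> q \<in> skel ws \<Longrightarrow> q \<in> nodes t"
  by (auto simp: skel_def nodes_empty_root intro: nodes_prefix)

locale emb =
  fixes t :: "'a ltree" and t' :: "'a ltree" and ws :: "nat list list" and h :: "nat list \<Rightarrow> nat list"
  assumes E0: "h [] = []"
    and E1: "\<And>q. q \<in> skel ws \<Longrightarrow> q \<noteq> [] \<Longrightarrow> h q \<noteq> [] \<and> h (butlast q) = butlast (h q)"
    and E2: "inj_on h (skel ws)"
    and E3: "\<And>q. q \<in> skel ws \<Longrightarrow> lab t' (h q) = lab t q"
    and E4: "\<And>q. q \<in> skel ws \<Longrightarrow> leftmost t' (h q) = leftmost t q"
    and E4': "\<And>q. q \<in> skel ws \<Longrightarrow> rightmost t' (h q) = rightmost t q"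
    and E5: "\<And>q1 q2. q1 \<in> skel ws \<Longrightarrow> q2 \<in> skel ws \<Longrightarrow> sib_succ t' (h q1) (h q2) = sib_succ t q1 q2"
    and E5': "\<And>q1 q2. q1 \<in> skel ws \<Longrightarrow> q2 \<in> skel ws \<Longrightarrow> sib_le t' (h q1) (h q2) = sib_le t q1 q2"
begin

lemma ev_map: "ev (map h ws) \<tau> = map_option h (ev ws \<tau>) \<and> (\<forall>q. ev ws \<tau> = Some q \<longrightarrow> q \<in> skel ws)"
proof (induction \<tau>)
  case (Var i) then show ?case by (auto simp: skel_entry)
next
  case Root then show ?case by (simp add: E0 skel_def)
next
  case (Par \<tau>)
  show ?case
  proof (cases "ev ws \<tau>")
    case None then show ?thesis using Par by simp
  next
    case (Some q)
    then have q: "q \<in> skel ws" and e: "ev (map h ws) \<tau> = Some (h q)" using Par by auto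
    show ?thesis
    proof (cases "q = []")
      case True then show ?thesis using Some e by (simp add: E0)
    next
      case False then show ?thesis using Some e E1[OF q] skel_butlast[OF q] by simp
    qed
  qed
qed

lemma ev_map1: "ev (map h ws) \<tau> = map_option h (ev ws \<tau>)" using ev_map by blast
lemma ev_skel: "ev ws \<tau> = Some q \<Longrightarrow> q \<in> skel ws" using ev_map by blast

lemma sat_map: "sat t' (map h ws) \<psi> = sat t ws \<psi>"
proof (induction \<psi>)
  case (Eq s u) then show ?case
    by (auto simp: ev_map1 split: option.splits dest!: ev_skel dest: inj_onD[OF E2])
next
  case (Lab a s) then show ?case by (auto simp: ev_map1 E3 split: option.splits dest!: ev_skel)
next
  case (LeftM s) then show ?case by (auto simp: ev_map1 E4 split: option.splits dest!: ev_skel)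
next
  case (RightM s) then show ?case by (auto simp: ev_map1 E4' split: option.splits dest!: ev_skel)
next
  case (SibLe s u) then show ?case by (auto simp: ev_map1 E5' split: option.splits dest!: ev_skel)
next
  case (SibSucc s u) then show ?case by (auto simp: ev_map1 E5 split: option.splits dest!: ev_skel)
qed auto

end


fun repl :: "'a ltree \<Rightarrow> nat list \<Rightarrow> 'a ltree \<Rightarrow> 'a ltree" where
  "repl t [] s = s"
| "repl (Nd a ts) (i # p) s = (if i < length ts then Nd a (ts[i := repl (ts!i) p s]) else Nd a ts)"

lemma subt_Cons_Some: "subt (Nd a ts) (i # p) = Some s \<longleftrightarrow> i < length ts \<and> subt (ts!i) p = Some s"
  by simp

lemma repl_R1: "p \<in> nodes t \<Longrightarrow> subt (repl t p s) (p @ r) = subt s r"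
proof (induction p arbitrary: t)
  case Nil then show ?case by simp
next
  case (Cons i p) then show ?case by (cases t) (auto simp: nodes_def split: if_splits)
qed

lemma repl_R2: "\<not> prefix p q \<Longrightarrow> \<not> prefix q p \<Longrightarrow> subt (repl t p s) q = subt t q"
proof (induction p arbitrary: t q)
  case Nil then show ?case by simp
next
  case (Cons i p)
  obtain a ts where t: "t = Nd a ts" by (cases t)
  show ?case
  proof (cases q)
    case Nil then show ?thesis using Cons by simp
  next
    case (Cons j q')
    show ?thesis
    proof (cases "j = i")
      case True
      then have "\<not> prefix p q'" "\<not> prefix q' p" using Cons.prems \<open>q = j # q'\<close> by auto
      then show ?thesis using Cons.IH t \<open>q = j # q'\<close> True by auto
    next
      case False then show ?thesis using t \<open>q = j # q'\<close> by auto
    qed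
  qed
qed

lemma repl_R3: "prefix q p \<Longrightarrow> q \<noteq> p \<Longrightarrow> subt t q = Some s0 \<Longrightarrow>
   \<exists>s1. subt (repl t p s) q = Some s1 \<and> root_lab s1 = root_lab s0 \<and> length (kids s1) = length (kids s0)"
proof (induction q arbitrary: t p)
  case Nil
  then obtain i p' where p: "p = i # p'" by (cases p) auto
  obtain a ts where t: "t = Nd a ts" by (cases t)
  show ?case using Nil p t by auto
next
  case (Cons j q)
  then obtain p' where p: "p = j # p'" by (auto simp: prefix_def)
  obtain a ts where t: "t = Nd a ts" by (cases t)
  have "j < length ts" using Cons.prems t by (auto split: if_splits)
  then show ?case using Cons.prems Cons.IH[of p' "ts!j"] p t by auto
qed

lemma lab_nch_repl_R3: "prefix q p \<Longrightarrow> q \<noteq> p \<Longrightarrow> q \<in> nodes t \<Longrightarrow>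
   lab (repl t p s) q = lab t q \<and> nchildren (repl t p s) q = nchildren t q"
  using repl_R3[of q p t _ s] by (auto simp: nodes_def lab_def nchildren_def)

lemma repl_nodes_R3: "prefix q p \<Longrightarrow> q \<in> nodes t \<Longrightarrow> p \<in> nodes t \<Longrightarrow> q \<in> nodes (repl t p s)"
  by (cases "q = p") (use repl_R1[of p t s "[]"] repl_R3[of q p t _ s] in \<open>auto simp: nodes_def\<close>)

lemma root_lab_repl: "p \<noteq> [] \<Longrightarrow> root_lab (repl t p s) = root_lab t"
  by (cases p; cases t) auto

lemma nsz_repl: "subt t p = Some s0 \<Longrightarrow> nsz (repl t p s) + nsz s0 = nsz t + nsz s"
proof (induction p arbitrary: t)
  case Nil then show ?case by simp
next
  case (Cons i p)
  obtain a ts where t: "t = Nd a ts" by (cases t)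
  have i: "i < length ts" and st: "subt (ts!i) p = Some s0" using Cons.prems t by (auto split: if_splits)
  have IH: "nsz (repl (ts!i) p s) + nsz s0 = nsz (ts!i) + nsz s" using Cons.IH st by blast
  have "sum_list (map nsz (ts[i := repl (ts!i) p s])) + nsz (ts!i) = sum_list (map nsz ts) + nsz (repl (ts!i) p s)"
    using i elem_le_sum_list[of i "map nsz ts"] by (simp add: map_update sum_list_update)
  then show ?case using t i IH by simp
qed

lemma gen_sub: "gen R (Nd a ts) \<Longrightarrow> s \<in> set ts \<Longrightarrow> gen R s"
  by (erule gen.cases) auto

lemma gen_subt: "gen R t \<Longrightarrow> subt t p = Some s \<Longrightarrow> gen R s"
proof (induction p arbitrary: t)
  case Nil then show ?case by simp
next
  case (Cons i p)
  obtain a ts where t: "t = Nd a ts" by (cases t)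
  then show ?case using Cons gen_sub[of R a ts "ts!i"] by (auto split: if_splits)
qed

lemma gen_update: "gen R (Nd a ts) \<Longrightarrow> i < length ts \<Longrightarrow> gen R s \<Longrightarrow> root_lab s = root_lab (ts!i) \<Longrightarrow>
  gen R (Nd a (ts[i := s]))"
proof (erule gen.cases, goal_cases)
  case (1 a') then show ?case by simp
next
  case (2 a' b t)
  then show ?case by (auto intro: gen.intros)
next
  case (3 a' b c t1 t2)
  then have "i = 0 \<or> i = 1" by auto
  then show ?case using 3 by (auto intro: gen.intros)
next
  case (4 a' b ts')
  then show ?case by (auto intro!: gen.intros dest: set_update_subset_insert[THEN subsetD])
qed

lemma gen_repl: "gen R t \<Longrightarrow> subt t p = Some s0 \<Longrightarrow> gen R s \<Longrightarrow> root_lab s = root_lab s0 \<Longrightarrow> gen R (repl t p s)"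
proof (induction p arbitrary: t)
  case Nil then show ?case by simp
next
  case (Cons i p)
  obtain a ts where t: "t = Nd a ts" by (cases t)
  have i: "i < length ts" and st: "subt (ts!i) p = Some s0" using Cons.prems t by (auto split: if_splits)
  have g: "gen R (ts!i)" using Cons.prems(1) t i by (auto intro: gen_sub)
  have "gen R (repl (ts!i) p s)" using Cons.IH[OF g st] Cons.prems by blast
  moreover have "root_lab (repl (ts!i) p s) = root_lab (ts!i)"
    using Cons.prems st by (cases p) (auto simp: root_lab_repl)
  ultimately show ?case using gen_update[of R a ts i] Cons.prems t i by auto
qed

lemma gen_star_inv: "gen R (Nd a ts) \<Longrightarrow> 3 \<le> length ts \<Longrightarrow> \<exists>b. Star a b \<in> R \<and> (\<forall>s\<in>set ts. gen R s \<and> root_lab s = b)"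
  by (erule gen.cases) auto


definition idx :: "nat \<Rightarrow> nat \<Rightarrow> nat \<Rightarrow> nat \<Rightarrow> nat \<Rightarrow> nat" where
  "idx a g m j c = (if c < a then c else if c < a+g then c + j*(g+1) else c + m*(g+1) - g)"

lemma jm_bound: "(j::nat) < m \<Longrightarrow> j*(g+1) + (g+1) \<le> m*(g+1)"
proof -
  assume "j < m" then have "Suc j * (g+1) \<le> m*(g+1)" by (intro mult_le_mono1) simp
  then show ?thesis by simp
qed

lemma idx_mono: "j < m \<Longrightarrow> (idx a g m j c1 \<le> idx a g m j c2) = (c1 \<le> c2)"
  using jm_bound[of j m g] by (auto simp: idx_def)

lemma idx_inj: "j < m \<Longrightarrow> (idx a g m j c1 = idx a g m j c2) = (c1 = c2)"
  using idx_mono[of j m a g c1 c2] idx_mono[of j m a g c2 c1] by auto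

lemma idx_zero: "1 \<le> a \<Longrightarrow> (idx a g m j c = 0) = (c = 0)"
  by (auto simp: idx_def)

lemma idx_succ: "j < m \<Longrightarrow> 1 \<le> a \<Longrightarrow> 1 \<le> g \<Longrightarrow> c1 \<noteq> a - 1 \<Longrightarrow> c1 \<noteq> a + g \<Longrightarrow> c2 \<noteq> a - 1 \<Longrightarrow> c2 \<noteq> a + g \<Longrightarrow>
   (idx a g m j c2 = Suc (idx a g m j c1)) = (c2 = Suc c1)"
  using jm_bound[of j m g] by (auto simp: idx_def)

lemma idx_last: "j < m \<Longrightarrow> c < n \<Longrightarrow> a + g < n \<Longrightarrow>
   (Suc (idx a g m j c) = n + m*(g+1) - g) = (Suc c = n)"
  using jm_bound[of j m g] by (auto simp: idx_def)

lemma idx_G_range: "j < m \<Longrightarrow> a \<le> c \<Longrightarrow> c < a + g \<Longrightarrow>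
   a + j*(g+1) \<le> idx a g m j c \<and> idx a g m j c < a + j*(g+1) + g"
  by (auto simp: idx_def)

lemma idx_G_diff: "j < m \<Longrightarrow> j' < m \<Longrightarrow> j \<noteq> j' \<Longrightarrow> a \<le> c \<Longrightarrow> c < a + g \<Longrightarrow> a \<le> c' \<Longrightarrow> c' < a + g \<Longrightarrow>
   idx a g m j c \<noteq> idx a g m j' c'"
proof -
  assume as: "j < m" "j' < m" "j \<noteq> j'" "a \<le> c" "c < a + g" "a \<le> c'" "c' < a + g"
  have A: "idx a g m j c = c + j*(g+1)" "idx a g m j' c' = c' + j'*(g+1)" using as by (auto simp: idx_def)
  show ?thesis
  proof (cases "j < j'")
    case True then have "j*(g+1) + (g+1) \<le> j'*(g+1)" using jm_bound by blast
    then show ?thesis using A as by linarith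
  next
    case False then have "j'*(g+1) + (g+1) \<le> j*(g+1)" using jm_bound as by (metis nat_neq_iff)
    then show ?thesis using A as by linarith
  qed
qed


lemma prefix_strict_cases: "prefix p q \<Longrightarrow> q \<noteq> p \<Longrightarrow> \<exists>c r. q = p @ c # r"
  unfolding prefix_def by (metis append.right_neutral list.exhaust)

lemma subt_nsz: "subt t p = Some s \<Longrightarrow> nsz s \<le> nsz t"
proof (induction p arbitrary: t)
  case Nil then show ?case by simp
next
  case (Cons i p)
  obtain a ts where t: "t = Nd a ts" by (cases t)
  have i: "i < length ts" and st: "subt (ts!i) p = Some s" using Cons.prems t by (auto split: if_splits)
  have "nsz (ts!i) \<le> sum_list (map nsz ts)" using i elem_le_sum_list[of i "map nsz ts"] by simp
  then show ?case using Cons.IH[OF st] t by simp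
qed

locale pump =
  fixes t :: "'a ltree" and p :: "nat list" and b :: 'a and cs :: "'a ltree list" and a g m :: nat
  assumes sp: "subt t p = Some (Nd b cs)" and a1: "1 \<le> a" and g1: "1 \<le> g" and ag: "a + g < length cs" and m1: "1 \<le> m"
begin

definition blk where "blk = take g (drop a cs) @ [cs ! (a - 1)]"
definition cs' where "cs' = take a cs @ concat (replicate m blk) @ drop (a+g) cs"
definition t' where "t' = repl t p (Nd b cs')"
definition hm where "hm j q = (if length p < length q \<and> take (length p) q = p
    then p @ idx a g m j (q ! length p) # drop (Suc (length p)) q else q)"

lemma length_blk: "length blk = g + 1" using ag by (simp add: blk_def)

lemma length_concat_rep: "length (concat (replicate k xs)) = k * length xs"
  by (induction k) auto

lemma nth_concat_rep: "r < length L \<Longrightarrow> j < k \<Longrightarrow> concat (replicate k L) ! (j * length L + r) = L ! r"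
proof (induction k arbitrary: j)
  case 0 then show ?case by simp
next
  case (Suc k) then show ?case
    by (cases j) (auto simp: nth_append length_concat_rep add.assoc)
qed

lemma length_cs': "length cs' = length cs + m*(g+1) - g"
  using ag by (simp add: cs'_def length_concat_rep length_blk)

lemma nth_cs': assumes "j < m" "c < length cs"
  shows "idx a g m j c < length cs' \<and> cs' ! idx a g m j c = cs ! c"
proof -
  have jm: "j*(g+1) + (g+1) \<le> m*(g+1)" using jm_bound assms by blast
  consider "c < a" | "a \<le> c \<and> c < a + g" | "a + g \<le> c" by linarith
  then show ?thesis
  proof cases
    case 1 then show ?thesis using ag assms by (auto simp: idx_def cs'_def nth_append length_concat_rep length_blk)
  next
    case 2
    have "concat (replicate m blk) ! (j * length blk + (c - a)) = blk ! (c - a)"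
      by (rule nth_concat_rep) (use 2 assms length_blk in auto)
    moreover have "blk ! (c - a) = cs ! c" using 2 ag by (auto simp: blk_def nth_append)
    ultimately show ?thesis using 2 ag assms jm
      by (auto simp: idx_def cs'_def nth_append length_concat_rep length_blk min_def algebra_simps)
  next
    case 3
    have e: "c + m*(g+1) - g = a + m*(g+1) + (c - (a+g))" using 3 by simp
    show ?thesis using 3 ag assms jm unfolding idx_def e
      by (auto simp: cs'_def nth_append length_concat_rep length_blk min_def)
  qed
qed

lemma set_cs': "set cs' \<subseteq> set cs"
proof -
  have "set blk \<subseteq> set cs" using ag a1 by (auto simp: blk_def dest: in_set_takeD in_set_dropD)
  then show ?thesis by (auto simp: cs'_def dest: in_set_takeD in_set_dropD)
qed

lemma p_node: "p \<in> nodes t" using sp by (simp add: nodes_def)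

lemma hm_app: "hm j (p @ c # r) = p @ idx a g m j c # r"
  by (simp add: hm_def)

lemma hm_other: "\<not> (prefix p q \<and> q \<noteq> p) \<Longrightarrow> hm j q = q"
  by (auto simp: hm_def prefix_def) (metis append_take_drop_id)

lemma hm_p: "hm j p = p" by (simp add: hm_def)

lemma length_hm: "length (hm j q) = length q"
  by (cases "prefix p q \<and> q \<noteq> p") (auto dest!: prefix_strict_cases simp: hm_app hm_other)

lemma hm_Nil: "hm j [] = []" by (simp add: hm_def)

lemma hm_Nil_iff: "(hm j q = []) = (q = [])" using length_hm[of j q] by auto

lemma butlast_hm: "hm j (butlast q) = butlast (hm j q)"
proof (cases "prefix p q \<and> q \<noteq> p")
  case True
  then obtain c r where q: "q = p @ c # r" using prefix_strict_cases by blast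
  show ?thesis
  proof (cases "r = []")
    case True then show ?thesis using q by (simp add: hm_app hm_p butlast_append)
  next
    case False then show ?thesis using q by (simp add: hm_app butlast_append)
  qed
next
  case False
  have "\<not> (prefix p (butlast q) \<and> butlast q \<noteq> p)"
  proof
    assume A: "prefix p (butlast q) \<and> butlast q \<noteq> p"
    then have "prefix p q" using prefixeq_butlast prefix_order.trans by blast
    moreover have "q \<noteq> p"
    proof
      assume qp: "q = p"
      with A have "p \<noteq> []" by auto
      then have l: "length (butlast p) < length p" by simp
      have "length p \<le> length (butlast p)" using A qp prefix_length_le by blast
      with l show False by linarith
    qed
    ultimately show False using False by blast
  qed
  then show ?thesis using False by (simp add: hm_other)
qed


lemma subt_t'_p: "subt t' (p @ r) = subt (Nd b cs') r"
  unfolding t'_def by (rule repl_R1[OF p_node])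

lemma subt_t_p: "subt t (p @ r) = subt (Nd b cs) r"
  using sp by (simp add: subt_append)

lemma subt_ext: assumes "c < length cs" "j < m"
  shows "subt t' (hm j (p @ c # r)) = subt t (p @ c # r)"
  using nth_cs'[OF assms(2,1)] assms by (simp add: hm_app subt_t'_p subt_t_p)

lemma LN: assumes q: "q \<in> nodes t" and j: "j < m"
  shows "hm j q \<in> nodes t' \<and> lab t' (hm j q) = lab t q \<and> (q \<noteq> p \<longrightarrow> nchildren t' (hm j q) = nchildren t q)"
proof (cases "prefix p q \<and> q \<noteq> p")
  case True
  then obtain c r where qq: "q = p @ c # r" using prefix_strict_cases by blast
  have "c < length cs" using q qq by (auto simp: nodes_def subt_t_p split: if_splits)
  then have "subt t' (hm j q) = subt t q" using subt_ext j qq by blast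
  then show ?thesis using q by (simp add: nodes_def lab_def nchildren_def)
next
  case False
  then have hq: "hm j q = q" by (rule hm_other)
  show ?thesis
  proof (cases "q = p")
    case True
    then show ?thesis using subt_t'_p[of "[]"] sp by (simp add: hm_p nodes_def lab_def)
  next
    case qp: False
    show ?thesis
    proof (cases "prefix q p")
      case True
      then show ?thesis using lab_nch_repl_R3[OF True qp q] repl_nodes_R3[OF True q p_node] hq
        by (simp add: t'_def)
    next
      case nqp: False
      have "\<not> prefix p q" using False qp by blast
      then have "subt t' q = subt t q" unfolding t'_def using repl_R2 nqp by blast
      then show ?thesis using q hq by (simp add: nodes_def lab_def nchildren_def)
    qed
  qed
qed

lemma nch_p': "nchildren t' p = length cs'"
  using subt_t'_p[of "[]"] by (simp add: nchildren_def)

lemma nch_p: "nchildren t p = length cs"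
  using sp by (simp add: nchildren_def)

definition Rg where "Rg = {q. \<exists>c\<ge>a. prefix (p @ [c]) q}"

lemma hm_notR: "q \<notin> Rg \<Longrightarrow> hm j q = q"
proof (cases "prefix p q \<and> q \<noteq> p")
  case True
  assume "q \<notin> Rg"
  then obtain c r where qq: "q = p @ c # r" using True prefix_strict_cases by blast
  with \<open>q \<notin> Rg\<close> have "c < a" by (auto simp: Rg_def)
  then show ?thesis using qq by (simp add: hm_app idx_def)
qed (simp add: hm_other)

lemma subt_notR: assumes "q \<notin> Rg" "\<not> prefix q p" shows "subt t' q = subt t q"
proof (cases "prefix p q")
  case True
  then have "q \<noteq> p" using assms by auto
  then obtain c r where qq: "q = p @ c # r" using True prefix_strict_cases by blast
  with assms have ca: "c < a" by (auto simp: Rg_def)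
  then have "subt t' (hm 0 q) = subt t q" using qq subt_ext[of c 0 r] ag m1 by simp
  moreover have "hm 0 q = q" using hm_notR assms by blast
  ultimately show ?thesis by simp
next
  case False then show ?thesis using repl_R2 assms unfolding t'_def by blast
qed

lemma nch_notR: assumes "q \<notin> Rg" shows "nchildren t q \<le> nchildren t' q"
proof (cases "q = p")
  case True
  have "g \<le> m*(g+1)" using m1 by (metis add_leD1 le_add1 mult.commute mult_le_mono2 nat_mult_1_right)
  then have "length cs \<le> length cs + m*(g+1) - g" by linarith
  then show ?thesis using True nch_p nch_p' length_cs' by metis
next
  case False
  show ?thesis
  proof (cases "prefix q p")
    case True
    show ?thesis
    proof (cases "q \<in> nodes t")
      case True then show ?thesis using lab_nch_repl_R3[OF \<open>prefix q p\<close> False True, of "Nd b cs'"] by (simp add: t'_def)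
    next
      case False then show ?thesis by (simp add: nodes_def nchildren_def)
    qed
  next
    case False then show ?thesis using subt_notR assms by (simp add: nchildren_def)
  qed
qed

lemma hm_inj: assumes "j < m" shows "inj (hm j)"
proof (rule injI)
  fix q1 q2 assume e: "hm j q1 = hm j q2"
  show "q1 = q2"
  proof (cases "prefix p q1 \<and> q1 \<noteq> p")
    case T1: True
    then obtain c1 r1 where q1: "q1 = p @ c1 # r1" using prefix_strict_cases by blast
    show ?thesis
    proof (cases "prefix p q2 \<and> q2 \<noteq> p")
      case True
      then obtain c2 r2 where q2: "q2 = p @ c2 # r2" using prefix_strict_cases by blast
      then show ?thesis using e q1 idx_inj[OF assms] by (simp add: hm_app)
    next
      case False
      have "q2 = p @ idx a g m j c1 # r1" using e q1 hm_other[OF False] by (simp add: hm_app)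
      then have "prefix p q2 \<and> q2 \<noteq> p" by simp
      then show ?thesis using False by blast
    qed
  next
    case F1: False
    show ?thesis
    proof (cases "prefix p q2 \<and> q2 \<noteq> p")
      case True
      then obtain c2 r2 where q2: "q2 = p @ c2 # r2" using prefix_strict_cases by blast
      then show ?thesis using e hm_other[OF F1] F1 by (simp add: hm_app)
    next
      case False then show ?thesis using e hm_other[OF F1] hm_other[OF False] by simp
    qed
  qed
qed

lemma last_hm: "butlast q \<noteq> p \<Longrightarrow> last (hm j q) = last q"
proof (cases "prefix p q \<and> q \<noteq> p")
  case True
  assume bq: "butlast q \<noteq> p"
  then obtain c r where qq: "q = p @ c # r" using True prefix_strict_cases by blast
  with bq have "r \<noteq> []" by (auto simp: butlast_append)
  then show ?thesis using qq by (simp add: hm_app)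
qed (simp add: hm_other)

lemma hm_child: "butlast q = p \<Longrightarrow> q \<noteq> [] \<Longrightarrow> hm j q = p @ [idx a g m j (last q)]"
  by (metis append_butlast_last_id hm_app)

lemma pump_emb:
  assumes ws: "set ws \<subseteq> nodes t" and n1: "p @ [a - 1] \<notin> skel ws" and n2: "p @ [a + g] \<notin> skel ws" and j: "j < m"
  shows "emb t t' ws (hm j)"
proof -
  have qn: "\<And>q. q \<in> skel ws \<Longrightarrow> q \<in> nodes t" using skel_nodes ws by blast
  have inj: "inj (hm j)" using hm_inj j by blast
  have lastc: "\<And>q. q \<in> skel ws \<Longrightarrow> butlast q = p \<Longrightarrow> q \<noteq> [] \<Longrightarrow> last q \<noteq> a - 1 \<and> last q \<noteq> a + g \<and> last q < length cs"
  proof -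
    fix q assume q: "q \<in> skel ws" "butlast q = p" "q \<noteq> []"
    then have qe: "q = p @ [last q]" by (metis append_butlast_last_id)
    have "last q < length cs" using qn[OF q(1)] qe subt_t_p[of "[last q]"] by (auto simp: nodes_def split: if_splits)
    then show "last q \<noteq> a - 1 \<and> last q \<noteq> a + g \<and> last q < length cs" using q(1) qe n1 n2 by metis
  qed
  show ?thesis
  proof
    show "hm j [] = []" by (rule hm_Nil)
  next
    fix q assume "q \<in> skel ws" "q \<noteq> []"
    then show "hm j q \<noteq> [] \<and> hm j (butlast q) = butlast (hm j q)" by (simp add: hm_Nil_iff butlast_hm)
  next
    show "inj_on (hm j) (skel ws)" using inj by (simp add: inj_on_def inj_def)
  next
    fix q assume "q \<in> skel ws" then show "lab t' (hm j q) = lab t q" using LN[OF qn j] by blast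
  next
    fix q assume q: "q \<in> skel ws"
    show "leftmost t' (hm j q) = leftmost t q"
    proof (cases "butlast q = p \<and> q \<noteq> []")
      case True
      then show ?thesis using LN[OF qn[OF q] j] q hm_child[of q j] idx_zero[OF a1] qn[OF q]
        by (simp add: leftmost_def)
    next
      case False
      then show ?thesis using LN[OF qn[OF q] j] q last_hm[of q j] qn[OF q] hm_Nil_iff[of j q]
        by (auto simp: leftmost_def)
    qed
  next
    fix q assume q: "q \<in> skel ws"
    show "rightmost t' (hm j q) = rightmost t q"
    proof (cases "butlast q = p \<and> q \<noteq> []")
      case True
      have "(Suc (idx a g m j (last q)) = length cs + m*(g+1) - g) = (Suc (last q) = length cs)"
        by (rule idx_last[OF j]) (use lastc[OF q] True ag in auto)
      then show ?thesis using LN[OF qn[OF q] j] q hm_child[of q j] True qn[OF q] nch_p nch_p' length_cs'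
        by (auto simp: rightmost_def)
    next
      case False
      have bq: "butlast q \<in> nodes t" using qn[OF q] nodes_butlast by blast
      show ?thesis
      proof (cases "q = []")
        case True then show ?thesis using LN[OF qn[OF q] j] by (simp add: rightmost_def hm_Nil nodes_empty_root)
      next
        case qne: False
        then have "butlast q \<noteq> p" using False by blast
        then show ?thesis using LN[OF qn[OF q] j] LN[OF bq j] last_hm[of q j] qne hm_Nil_iff[of j q] qn[OF q]
          by (simp add: rightmost_def butlast_hm)
      qed
    qed
  next
    fix q1 q2 assume q1: "q1 \<in> skel ws" and q2: "q2 \<in> skel ws"
    have bb: "(butlast (hm j q1) = butlast (hm j q2)) = (butlast q1 = butlast q2)"
      using inj by (simp add: butlast_hm[symmetric] inj_eq)
    show "sib_succ t' (hm j q1) (hm j q2) = sib_succ t q1 q2"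
    proof (cases "butlast q1 = p \<and> q1 \<noteq> [] \<and> butlast q2 = p \<and> q2 \<noteq> []")
      case True
      have "(idx a g m j (last q2) = Suc (idx a g m j (last q1))) = (last q2 = Suc (last q1))"
        by (rule idx_succ[OF j a1 g1]) (use lastc[OF q1] lastc[OF q2] True in auto)
      then show ?thesis using LN[OF qn[OF q1] j] LN[OF qn[OF q2] j] hm_child[of q1 j] hm_child[of q2 j] True qn[OF q1] qn[OF q2]
        by (auto simp: sib_succ_def)
    next
      case False
      then show ?thesis using LN[OF qn[OF q1] j] LN[OF qn[OF q2] j] qn[OF q1] qn[OF q2] bb
          last_hm[of q1 j] last_hm[of q2 j] hm_Nil_iff[of j q1] hm_Nil_iff[of j q2]
        by (auto simp: sib_succ_def)
    qed
  next
    fix q1 q2 assume q1: "q1 \<in> skel ws" and q2: "q2 \<in> skel ws"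
    have bb: "(butlast (hm j q1) = butlast (hm j q2)) = (butlast q1 = butlast q2)"
      using inj by (simp add: butlast_hm[symmetric] inj_eq)
    have ee: "(hm j q1 = hm j q2) = (q1 = q2)" using inj by (simp add: inj_eq)
    show "sib_le t' (hm j q1) (hm j q2) = sib_le t q1 q2"
    proof (cases "butlast q1 = p \<and> q1 \<noteq> [] \<and> butlast q2 = p \<and> q2 \<noteq> []")
      case True
      have "(idx a g m j (last q1) \<le> idx a g m j (last q2)) = (last q1 \<le> last q2)"
        by (rule idx_mono[OF j])
      then show ?thesis using LN[OF qn[OF q1] j] LN[OF qn[OF q2] j] hm_child[of q1 j] hm_child[of q2 j] True qn[OF q1] qn[OF q2] ee
        by (auto simp: sib_le_def)
    next
      case False
      then show ?thesis using LN[OF qn[OF q1] j] LN[OF qn[OF q2] j] qn[OF q1] qn[OF q2] bb ee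
          last_hm[of q1 j] last_hm[of q2 j] hm_Nil_iff[of j q1] hm_Nil_iff[of j q2]
        by (auto simp: sib_le_def)
    qed
  qed
qed

lemma pump_lang: assumes "t \<in> lang R r" shows "t' \<in> lang R r"
proof -
  have gt: "gen R t" and rt: "root_lab t = r" using assms by (auto simp: lang_def)
  have gs: "gen R (Nd b cs)" using gen_subt[OF gt sp] .
  have "3 \<le> length cs" using ag a1 g1 by linarith
  then obtain c where "Star b c \<in> R" and ch: "\<forall>s\<in>set cs. gen R s \<and> root_lab s = c"
    using gen_star_inv[OF gs] by blast
  then have g': "gen R (Nd b cs')" using set_cs' by (auto intro!: gen_star)
  have "gen R t'" unfolding t'_def by (rule gen_repl[OF gt sp g']) simp
  moreover have "root_lab t' = r"
  proof (cases "p = []")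
    case True
    have "t' = Nd b cs'" unfolding t'_def using True by simp
    moreover have "t = Nd b cs" using sp True by simp
    ultimately show ?thesis using rt by simp
  next
    case False then show ?thesis using rt by (simp add: t'_def root_lab_repl)
  qed
  ultimately show ?thesis by (simp add: lang_def)
qed

lemma take_drop_map_nth: "k + n \<le> length xs \<Longrightarrow> take n (drop k xs) = map (\<lambda>i. xs ! i) [k..<k+n]"
  by (rule nth_equalityI) auto

lemma sum_list_slice: "k + n \<le> length xs \<Longrightarrow> sum_list (map f (take n (drop k xs))) = (\<Sum>i = k..<k+n. f (xs ! i))"
  using sum_set_upt_conv_sum_list_nat[of "\<lambda>i. f (xs ! i)" k "k+n"] by (simp add: take_drop_map_nth comp_def)

definition K where "K = (\<Sum>i = a-1..<a+g. nsz (cs ! i))"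

lemma pump_size: "nsz t' \<le> nsz t + m * K"
proof -
  have e: "nsz t' + nsz (Nd b cs) = nsz t + nsz (Nd b cs')" unfolding t'_def by (rule nsz_repl[OF sp])
  have d: "cs = take a cs @ take g (drop a cs) @ drop (a+g) cs"
    by (metis append.assoc append_take_drop_id add.commute drop_drop take_add)
  have sb: "sum_list (map nsz blk) = K"
  proof -
    have "drop (a-1) cs = cs ! (a-1) # drop (Suc (a-1)) cs"
      using a1 ag by (intro Cons_nth_drop_Suc[symmetric]) linarith
    then have "take (g+1) (drop (a-1) cs) = cs ! (a-1) # take g (drop a cs)"
      using a1 by simp
    then have "sum_list (map nsz (take (g+1) (drop (a-1) cs))) = sum_list (map nsz blk)"
      by (simp add: blk_def)
    moreover have "sum_list (map nsz (take (g+1) (drop (a-1) cs))) = K"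
      unfolding K_def using a1 ag by (subst sum_list_slice) auto
    ultimately show ?thesis by simp
  qed
  have sr: "\<And>k L. sum_list (map nsz (concat (replicate k L))) = k * sum_list (map nsz L)"
  proof -
    fix k L show "sum_list (map nsz (concat (replicate k L))) = k * sum_list (map nsz L)" by (induction k) auto
  qed
  have "sum_list (map nsz cs') = sum_list (map nsz (take a cs)) + m * K + sum_list (map nsz (drop (a+g) cs))"
    by (simp add: cs'_def sr sb)
  moreover have "sum_list (map nsz cs) = sum_list (map nsz (take a cs)) + sum_list (map nsz (take g (drop a cs))) + sum_list (map nsz (drop (a+g) cs))"
    by (subst d) simp
  ultimately have "sum_list (map nsz cs') \<le> sum_list (map nsz cs) + m * K" by linarith
  then show ?thesis using e by simp
qed

lemma K_le: "K \<le> nsz t"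
proof -
  have "K \<le> (\<Sum>i<length cs. nsz (cs ! i))"
    unfolding K_def using ag by (intro sum_mono2) auto
  also have "\<dots> = sum_list (map nsz cs)" by (simp add: sum_list_sum_nth atLeast0LessThan)
  also have "\<dots> < nsz (Nd b cs)" by simp
  also have "\<dots> \<le> nsz t" by (rule subt_nsz[OF sp])
  finally show ?thesis by simp
qed

lemma pump_tuples: "ws \<in> tuples t l \<Longrightarrow> j < m \<Longrightarrow> map (hm j) ws \<in> tuples t' l"
  using LN by (auto simp: tuples_def)

lemma pump_distinct:
  assumes j: "j < m" "j' < m" and i: "i < length ws" "i < length ws'" and e0: "ws ! i = q0" "ws' ! i = q0"
    and q0: "prefix (p @ [c0]) q0" "a \<le> c0" "c0 < a + g"
    and e: "map (hm j) ws = map (hm j') ws'"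
  shows "j = j' \<and> ws = ws'"
proof -
  obtain r where qr: "q0 = p @ c0 # r" using q0(1) by (auto simp: prefix_def)
  have "hm j q0 = hm j' q0" using e i e0 by (metis nth_map)
  then have "idx a g m j c0 = idx a g m j' c0" using qr by (simp add: hm_app)
  then have jj: "j = j'" using idx_G_diff[OF j _ q0(2,3) q0(2,3)] by blast
  then show ?thesis using e hm_inj[OF j(1)] by (simp add: inj_map_eq_map)
qed

lemma take_hm: "take k (hm j v) = hm j (take k v)"
proof (cases "prefix p v \<and> v \<noteq> p")
  case True
  then obtain c r where vv: "v = p @ c # r" using prefix_strict_cases by blast
  show ?thesis
  proof (cases "k \<le> length p")
    case True
    have tk: "take k v = take k p" using vv True by simp
    have "\<not> (prefix p (take k v) \<and> take k v \<noteq> p)"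
    proof
      assume A: "prefix p (take k v) \<and> take k v \<noteq> p"
      then have "length p \<le> k" using tk prefix_length_le by fastforce
      then have "take k p = p" by simp
      then show False using A tk by simp
    qed
    then have "hm j (take k v) = take k v" by (rule hm_other)
    moreover have "take k (hm j v) = take k p" using vv True by (simp add: hm_app)
    ultimately show ?thesis using tk by simp
  next
    case False
    then have k: "k = length p + Suc (k - length p - 1)" by simp
    have "take k v = p @ c # take (k - length p - 1) r" using vv by (subst k) simp
    moreover have "take k (hm j v) = p @ idx a g m j c # take (k - length p - 1) r" using vv by (subst k) (simp add: hm_app)
    ultimately show ?thesis by (simp add: hm_app)
  qed
next
  case False
  have "\<not> (prefix p (take k v) \<and> take k v \<noteq> p)"
  proof
    assume A: "prefix p (take k v) \<and> take k v \<noteq> p"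
    then have "prefix p v" using take_is_prefix prefix_order.trans by blast
    moreover have "v \<noteq> p" using A by (metis prefix_order.antisym take_is_prefix)
    ultimately show False using False by blast
  qed
  then show ?thesis using False by (simp add: hm_other)
qed

lemma prefix_hm: "prefix q (hm j v) \<Longrightarrow> \<exists>q'. prefix q' v \<and> q = hm j q'"
proof -
  assume "prefix q (hm j v)"
  then have "q = take (length q) (hm j v)" by (auto simp: prefix_def)
  then have "q = hm j (take (length q) v)" by (simp add: take_hm)
  then show ?thesis using take_is_prefix by blast
qed

lemma skel_map_hm: "q \<in> skel (map (hm j) ws) \<Longrightarrow> \<exists>q'\<in>skel ws. q = hm j q'"
proof -
  assume "q \<in> skel (map (hm j) ws)"
  then consider "q = []" | v where "v \<in> set ws" "prefix q (hm j v)" by (auto simp: skel_def)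
  then show ?thesis
  proof cases
    case 1 then show ?thesis using hm_Nil by (auto simp: skel_def)
  next
    case 2
    then obtain q' where "prefix q' v" "q = hm j q'" using prefix_hm by blast
    then show ?thesis using 2 by (auto simp: skel_def)
  qed
qed

end


lemma LX1: "(xs::nat list) < xs @ c # v" by (induction xs) auto
lemma LX2: "(c1::nat) < c2 \<Longrightarrow> u @ c1 # v < u @ c2 # w" by (induction u) auto

locale iter =
  fixes R :: "'a rule set" and r :: 'a and t0 :: "'a ltree" and l :: nat and \<phi> :: "'a qf" and vs0 :: "nat list list"
    and X :: "nat set" and P :: "nat \<Rightarrow> nat list" and A G :: "nat \<Rightarrow> nat"
  assumes t0: "t0 \<in> lang R r" and vs0: "vs0 \<in> sols t0 l \<phi>" and finX: "finite X" and Xl: "X \<subseteq> {..<l}"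
   and I1: "\<And>i. i\<in>X \<Longrightarrow> 1 \<le> A i \<and> 1 \<le> G i \<and> A i + G i < nchildren t0 (P i)"
   and I2: "\<And>i. i\<in>X \<Longrightarrow> \<exists>c. A i \<le> c \<and> c < A i + G i \<and> prefix (P i @ [c]) (vs0 ! i)"
   and I3: "\<And>i. i\<in>X \<Longrightarrow> P i @ [A i - 1] \<notin> skel vs0 \<and> P i @ [A i + G i] \<notin> skel vs0"
   and I4: "\<And>i j c. i\<in>X \<Longrightarrow> j\<in>X \<Longrightarrow> j \<noteq> i \<Longrightarrow> A i \<le> c \<Longrightarrow> c < A i + G i \<Longrightarrow> \<not> prefix (P i @ [c]) (vs0 ! j)"
   and I5: "\<And>i c. i\<in>X \<Longrightarrow> A i \<le> c \<Longrightarrow> c < A i + G i \<Longrightarrow> P i @ [c] \<in> skel vs0"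
begin

definition key where "key i = P i @ [A i]"
definition RgI where "RgI u = {q. \<exists>c\<ge>A u. prefix (P u @ [c]) q}"

lemma sep: assumes u: "u \<in> X" and w: "w \<in> X" and uw: "u \<noteq> w" and P: "P u = P w"
  shows "A u + G u < A w \<or> A w + G w < A u"
proof -
  obtain cu where cu: "A u \<le> cu" "cu < A u + G u" "prefix (P u @ [cu]) (vs0 ! u)" using I2[OF u] by blast
  have n1: "\<not> (A w \<le> cu \<and> cu < A w + G w)" using I4[OF w u uw, of cu] cu P by auto
  have a1: "\<not> (A w \<le> A u - 1 \<and> A u - 1 < A w + G w)" using I5[OF w, of "A u - 1"] I3[OF u] P by auto
  have a2: "\<not> (A w \<le> A u + G u \<and> A u + G u < A w + G w)" using I5[OF w, of "A u + G u"] I3[OF u] P by auto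
  have a3: "\<not> (A u \<le> A w - 1 \<and> A w - 1 < A u + G u)" using I5[OF u, of "A w - 1"] I3[OF w] P by auto
  have a4: "\<not> (A u \<le> A w + G w \<and> A w + G w < A u + G u)" using I5[OF u, of "A w + G w"] I3[OF w] P by auto
  show ?thesis using I1[OF u] I1[OF w] n1 a1 a2 a3 a4 cu by linarith
qed

lemma key_inj: assumes "u \<in> X" "w \<in> X" "u \<noteq> w" shows "key u \<noteq> key w"
  using sep[OF assms] by (auto simp: key_def)

lemma unif:
  assumes u: "u \<in> X" and w: "w \<in> X" and uw: "u \<noteq> w" and kw: "key w < key u"
    and pr: "prefix (P u @ [c']) (P w @ [c])" and c': "A u \<le> c'" and c: "c \<le> A w + G w"
  shows False
proof -
  from pr have "P u @ [c'] = P w @ [c] \<or> prefix (P u @ [c']) (P w)" by simp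
  then show False
  proof
    assume e: "P u @ [c'] = P w @ [c]"
    then have P: "P u = P w" and cc: "c' = c" by auto
    from sep[OF u w uw P] show False
    proof
      assume "A u + G u < A w"
      then have "key u < key w" unfolding key_def using P LX2[of "A u" "A w" "P w" "[]" "[]"] by simp
      then show False using kw by simp
    next
      assume "A w + G w < A u" then show False using c' c cc by simp
    qed
  next
    assume "prefix (P u @ [c']) (P w)"
    then obtain z where z: "P w = P u @ c' # z" by (auto simp: prefix_def)
    have "key u < key w"
    proof (cases "c' = A u")
      case True then show ?thesis unfolding key_def using z LX1[of "P u @ [A u]"] 
        by (cases z) (simp_all add: LX1)
    next
      case False then have "A u < c'" using c' by simp
      then show ?thesis unfolding key_def using z LX2[of "A u" c' "P u" "[]" "z @ [A w]"] by simp
    qed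
    then show False using kw by simp
  qed
qed

lemma G3ii:
  assumes u: "u \<in> X" and w: "w \<in> X" and uw: "u \<noteq> w" and kw: "key w < key u"
    and c: "A w - 1 \<le> c" "c < A w + G w" and pr: "prefix (P w @ [c]) (P u)"
  shows False
proof -
  obtain z where z: "P u = P w @ c # z" using pr by (auto simp: prefix_def)
  show False
  proof (cases "c < A w")
    case True
    then have "key u < key w" unfolding key_def using z LX2[of c "A w" "P w" "z @ [A u]" "[]"] by simp
    then show False using kw by simp
  next
    case False
    obtain cu where cu: "A u \<le> cu" "cu < A u + G u" "prefix (P u @ [cu]) (vs0 ! u)" using I2[OF u] by blast
    have "prefix (P w @ [c]) (vs0 ! u)" using z cu(3) by (auto simp: prefix_def)
    then show False using I4[OF w u uw, of c] False c by simp
  qed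
qed

lemma notR_slice:
  assumes u: "u \<in> X" and w: "w \<in> X" and uw: "u \<noteq> w" and kw: "key w < key u" and c: "c \<le> A w + G w"
  shows "P w @ [c] \<notin> RgI u"
  using unif[OF u w uw kw _ _ c] by (auto simp: RgI_def)

lemma notR_P:
  assumes u: "u \<in> X" and w: "w \<in> X" and uw: "u \<noteq> w" and kw: "key w < key u"
  shows "P w \<notin> RgI u"
  using notR_slice[OF u w uw kw, of "A w"] by (auto simp: RgI_def intro: prefix_order.trans)

lemma notR_var:
  assumes u: "u \<in> X" and w: "w \<in> X" and uw: "u \<noteq> w" and kw: "key w < key u"
  shows "vs0 ! w \<notin> RgI u"
proof
  assume "vs0 ! w \<in> RgI u"
  then obtain c' where c': "A u \<le> c'" "prefix (P u @ [c']) (vs0 ! w)" by (auto simp: RgI_def)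
  obtain cw where cw: "A w \<le> cw" "cw < A w + G w" "prefix (P w @ [cw]) (vs0 ! w)" using I2[OF w] by blast
  from prefix_same_cases[OF c'(2) cw(3)]
  show False
  proof
    assume "prefix (P u @ [c']) (P w @ [cw])"
    then show False using unif[OF u w uw kw _ c'(1), of cw] cw by simp
  next
    assume h: "prefix (P w @ [cw]) (P u @ [c'])"
    then have "P w @ [cw] = P u @ [c'] \<or> prefix (P w @ [cw]) (P u)" by simp
    then show False
    proof
      assume "P w @ [cw] = P u @ [c']"
      then show False using unif[OF u w uw kw _ c'(1), of cw] cw by simp
    next
      assume "prefix (P w @ [cw]) (P u)"
      moreover have "A w - 1 \<le> cw" using cw(1) by simp
      ultimately show False using G3ii[OF u w uw kw _ cw(2)] by blast
    qed
  qed
qed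

definition INV where "INV t Y = (\<forall>w\<in>Y. A w + G w < nchildren t (P w) \<and>
   (\<forall>c. A w - 1 \<le> c \<longrightarrow> c < A w + G w \<longrightarrow> subt t (P w @ [c]) = subt t0 (P w @ [c])))"
definition FINV where "FINV F Y = (\<forall>ws\<in>F. \<forall>w\<in>Y. ws ! w = vs0 ! w \<and> P w @ [A w - 1] \<notin> skel ws \<and> P w @ [A w + G w] \<notin> skel ws)"

lemma nch_Some: "0 < nchildren t q \<Longrightarrow> \<exists>b cs. subt t q = Some (Nd b cs) \<and> length cs = nchildren t q"
proof -
  assume "0 < nchildren t q"
  then obtain s where s: "subt t q = Some s" by (cases "subt t q") (auto simp: nchildren_def)
  obtain b cs where "s = Nd b cs" by (cases s)
  then show ?thesis using s by (simp add: nchildren_def)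
qed

lemma step:
  assumes m: "1 \<le> m" and Y: "Y \<subseteq> X" and uY: "u \<in> Y" and kmax: "\<forall>w\<in>Y. key w \<le> key u"
    and t: "t \<in> lang R r" and F: "finite F" "F \<subseteq> sols t l \<phi>" and inv: "INV t Y" and finv: "FINV F Y"
  shows "\<exists>t' F'. t' \<in> lang R r \<and> finite F' \<and> F' \<subseteq> sols t' l \<phi> \<and> card F' = m * card F \<and>
     nsz t' \<le> nsz t + m * nsz t0 \<and> INV t' (Y - {u}) \<and> FINV F' (Y - {u})"
proof -
  have u: "u \<in> X" using Y uY by blast
  have ul: "u < l" using u Xl by blast
  have I1u: "1 \<le> A u" "1 \<le> G u" "A u + G u < nchildren t0 (P u)" using I1[OF u] by auto
  have nchu: "A u + G u < nchildren t (P u)" using inv uY by (simp add: INV_def)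
  obtain b cs where sp: "subt t (P u) = Some (Nd b cs)" and lcs: "length cs = nchildren t (P u)"
    using nch_Some[of t "P u"] nchu by auto
  obtain b0 cs0 where sp0: "subt t0 (P u) = Some (Nd b0 cs0)" and lcs0: "length cs0 = nchildren t0 (P u)"
    using nch_Some[of t0 "P u"] I1u by auto
  interpret pm: pump t "P u" b cs "A u" "G u" m
    by unfold_locales (use sp lcs nchu I1u m in auto)
  interpret p0: pump t0 "P u" b0 cs0 "A u" "G u" m
    by unfold_locales (use sp0 lcs0 I1u m in auto)
  define F' where "F' = (\<lambda>(j, ws). map (pm.hm j) ws) ` ({..<m} \<times> F)"
  have tup: "\<And>ws. ws \<in> F \<Longrightarrow> ws \<in> tuples t l \<and> sat t ws \<phi>" using F(2) by (auto simp: sols_def)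
  have wsu: "\<And>ws. ws \<in> F \<Longrightarrow> ws ! u = vs0 ! u" using finv uY by (simp add: FINV_def)
  obtain cu where cu: "A u \<le> cu" "cu < A u + G u" "prefix (P u @ [cu]) (vs0 ! u)" using I2[OF u] by blast
  have injF: "inj_on (\<lambda>(j, ws). map (pm.hm j) ws) ({..<m} \<times> F)"
  proof (rule inj_onI)
    fix x y assume x: "x \<in> {..<m} \<times> F" and y: "y \<in> {..<m} \<times> F"
      and e: "(\<lambda>(j, ws). map (pm.hm j) ws) x = (\<lambda>(j, ws). map (pm.hm j) ws) y"
    obtain j ws where xj: "x = (j, ws)" by (cases x)
    obtain j' ws' where yj: "y = (j', ws')" by (cases y)
    have a: "j < m" "ws \<in> F" "j' < m" "ws' \<in> F" "map (pm.hm j) ws = map (pm.hm j') ws'" using x y e xj yj by auto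
    have l1: "u < length ws" "u < length ws'" using tup[OF a(2)] tup[OF a(4)] ul by (auto simp: tuples_def)
    have "j = j' \<and> ws = ws'"
      by (rule pm.pump_distinct[of j j' u ws ws' "vs0 ! u" cu]) (use a l1 wsu cu in auto)
    then show "x = y" using xj yj by simp
  qed
  have cardF': "card F' = m * card F" unfolding F'_def using card_image[OF injF] by (simp add: card_cartesian_product)
  have finF': "finite F'" unfolding F'_def using F(1) by simp
  have solF': "F' \<subseteq> sols pm.t' l \<phi>"
  proof
    fix vs assume "vs \<in> F'"
    then obtain j ws where j: "j < m" and ws: "ws \<in> F" and vs: "vs = map (pm.hm j) ws" by (auto simp: F'_def)
    have n: "P u @ [A u - 1] \<notin> skel ws" "P u @ [A u + G u] \<notin> skel ws" using finv ws uY by (auto simp: FINV_def)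
    have wn: "set ws \<subseteq> nodes t" using tup[OF ws] by (simp add: tuples_def)
    interpret e: emb t pm.t' ws "pm.hm j" by (rule pm.pump_emb[OF wn n j])
    show "vs \<in> sols pm.t' l \<phi>" using e.sat_map tup[OF ws] pm.pump_tuples[of ws l j] j vs by (simp add: sols_def)
  qed
  have Keq: "pm.K = p0.K"
    unfolding pm.K_def p0.K_def
  proof (rule sum.cong)
    fix c assume c: "c \<in> {A u - 1..<A u + G u}"
    have "Some (cs ! c) = subt t (P u @ [c])" using sp c lcs nchu by (simp add: subt_append)
    also have "\<dots> = subt t0 (P u @ [c])" using inv uY c by (simp add: INV_def)
    also have "\<dots> = Some (cs0 ! c)" using sp0 c lcs0 I1u by (simp add: subt_append)
    finally show "nsz (cs ! c) = nsz (cs0 ! c)" by simp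
  qed simp
  have sz: "nsz pm.t' \<le> nsz t + m * nsz t0"
  proof -
    have "m * pm.K \<le> m * nsz t0" using p0.K_le Keq by simp
    then show ?thesis using pm.pump_size by linarith
  qed
  have inv': "INV pm.t' (Y - {u})"
    unfolding INV_def
  proof (intro ballI conjI allI impI)
    fix w assume w: "w \<in> Y - {u}"
    then have wX: "w \<in> X" and uw: "u \<noteq> w" using Y by auto
    have kw: "key w < key u" using kmax w key_inj[OF u wX uw] by (metis DiffD1 order.order_iff_strict)
    have "P w \<notin> pm.Rg" using notR_P[OF u wX uw kw] by (simp add: RgI_def pm.Rg_def)
    then have "nchildren t (P w) \<le> nchildren pm.t' (P w)" by (rule pm.nch_notR)
    then show "A w + G w < nchildren pm.t' (P w)" using inv w by (auto simp: INV_def)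
  next
    fix w c assume w: "w \<in> Y - {u}" and c: "A w - 1 \<le> c" "c < A w + G w"
    then have wX: "w \<in> X" and uw: "u \<noteq> w" using Y by auto
    have kw: "key w < key u" using kmax w key_inj[OF u wX uw] by (metis DiffD1 order.order_iff_strict)
    have "P w @ [c] \<notin> pm.Rg" using notR_slice[OF u wX uw kw, of c] c by (simp add: RgI_def pm.Rg_def)
    moreover have "\<not> prefix (P w @ [c]) (P u)" using G3ii[OF u wX uw kw c] by blast
    ultimately have "subt pm.t' (P w @ [c]) = subt t (P w @ [c])" by (rule pm.subt_notR)
    then show "subt pm.t' (P w @ [c]) = subt t0 (P w @ [c])" using inv w c by (auto simp: INV_def)
  qed
  have finv': "FINV F' (Y - {u})"
    unfolding FINV_def
  proof (intro ballI)
    fix vs w assume vs: "vs \<in> F'" and w: "w \<in> Y - {u}"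
    then obtain j ws where j: "j < m" and ws: "ws \<in> F" and vs: "vs = map (pm.hm j) ws" by (auto simp: F'_def)
    have wX: "w \<in> X" and uw: "u \<noteq> w" using w Y by auto
    have kw: "key w < key u" using kmax w key_inj[OF u wX uw] by (metis DiffD1 order.order_iff_strict)
    have wl: "w < length ws" using tup[OF ws] wX Xl by (auto simp: tuples_def)
    have fw: "ws ! w = vs0 ! w" "P w @ [A w - 1] \<notin> skel ws" "P w @ [A w + G w] \<notin> skel ws"
      using finv ws w by (auto simp: FINV_def)
    have "vs0 ! w \<notin> pm.Rg" using notR_var[OF u wX uw kw] by (simp add: RgI_def pm.Rg_def)
    then have e1: "vs ! w = vs0 ! w" using vs wl fw pm.hm_notR by simp
    have nn: "\<And>n. n \<notin> pm.Rg \<Longrightarrow> n \<notin> skel ws \<Longrightarrow> n \<notin> skel vs"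
    proof
      fix n assume n: "n \<notin> pm.Rg" "n \<notin> skel ws" "n \<in> skel vs"
      then obtain q' where q': "q' \<in> skel ws" "n = pm.hm j q'" using pm.skel_map_hm vs by blast
      have "pm.hm j n = n" using pm.hm_notR n by blast
      then have "q' = n" using q' pm.hm_inj[OF j] by (metis injD)
      then show False using q' n by simp
    qed
    have "P w @ [A w - 1] \<notin> pm.Rg" using notR_slice[OF u wX uw kw, of "A w - 1"] by (simp add: RgI_def pm.Rg_def)
    moreover have "P w @ [A w + G w] \<notin> pm.Rg" using notR_slice[OF u wX uw kw, of "A w + G w"] by (simp add: RgI_def pm.Rg_def)
    ultimately show "vs ! w = vs0 ! w \<and> P w @ [A w - 1] \<notin> skel vs \<and> P w @ [A w + G w] \<notin> skel vs"
      using nn fw e1 by blast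
  qed
  show ?thesis using pm.pump_lang[OF t] finF' solF' cardF' sz inv' finv' by blast
qed

lemma iterate:
  assumes m: "1 \<le> m"
  shows "card Y = n \<Longrightarrow> Y \<subseteq> X \<Longrightarrow> t \<in> lang R r \<Longrightarrow> finite F \<Longrightarrow> F \<subseteq> sols t l \<phi> \<Longrightarrow> INV t Y \<Longrightarrow> FINV F Y \<Longrightarrow>
    \<exists>t' F'. t' \<in> lang R r \<and> F' \<subseteq> sols t' l \<phi> \<and> card F' = m ^ n * card F \<and> nsz t' \<le> nsz t + n * m * nsz t0"
proof (induction n arbitrary: Y t F)
  case 0
  then have "Y = {}" using finX finite_subset by fastforce
  then show ?case using 0 by auto
next
  case (Suc n)
  have fY: "finite Y" using Suc.prems finX finite_subset by blast
  then have Yne: "Y \<noteq> {}" using Suc.prems by auto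
  define k where "k = Max (key ` Y)"
  have "k \<in> key ` Y" unfolding k_def using fY Yne by simp
  then obtain u where uY: "u \<in> Y" and ku: "key u = k" by blast
  have kmax: "\<forall>w\<in>Y. key w \<le> key u" using ku fY unfolding k_def by simp
  obtain t1 F1 where t1: "t1 \<in> lang R r" "finite F1" "F1 \<subseteq> sols t1 l \<phi>" "card F1 = m * card F"
      "nsz t1 \<le> nsz t + m * nsz t0" "INV t1 (Y - {u})" "FINV F1 (Y - {u})"
    using step[OF m Suc.prems(2) uY kmax Suc.prems(3,4,5,6,7)] by auto
  have cY: "card (Y - {u}) = n" using Suc.prems uY fY by simp
  obtain t2 F2 where t2: "t2 \<in> lang R r" "F2 \<subseteq> sols t2 l \<phi>" "card F2 = m ^ n * card F1" "nsz t2 \<le> nsz t1 + n * m * nsz t0"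
  proof -
    have "Y - {u} \<subseteq> X" using Suc.prems(2) by blast
    from Suc.IH[OF cY this t1(1,2,3,6,7)] show ?thesis using that by auto
  qed
  have "card F2 = m ^ Suc n * card F" using t2(3) t1(4) by simp
  moreover have "nsz t2 \<le> nsz t + Suc n * m * nsz t0"
  proof -
    have "nsz t + Suc n * m * nsz t0 = nsz t + m * nsz t0 + n * m * nsz t0" by (simp add: algebra_simps)
    then show ?thesis using t2(4) t1(5) by linarith
  qed
  ultimately show ?case using t2 by blast
qed

lemma lower_family:
  assumes m: "1 \<le> m"
  shows "\<exists>t' F'. t' \<in> lang R r \<and> F' \<subseteq> sols t' l \<phi> \<and> card F' = m ^ card X \<and> nsz t' \<le> nsz t0 + card X * m * nsz t0"
proof -
  have "INV t0 X" using I1 by (simp add: INV_def)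
  moreover have "FINV {vs0} X" using I3 by (simp add: FINV_def)
  moreover have "{vs0} \<subseteq> sols t0 l \<phi>" using vs0 by simp
  ultimately show ?thesis using iterate[OF m, where Y=X and n="card X" and t=t0 and F="{vs0}"] t0 by simp
qed

end


lemma trm_vars_pars: "trm_vars ((Par ^^ k) \<tau>) = trm_vars \<tau>"
  by (induction k) auto

lemma ev_pars: "j < length vs \<Longrightarrow> k \<le> length (vs ! j) \<Longrightarrow>
   ev vs ((Par ^^ k) (Var j)) = Some (take (length (vs ! j) - k) (vs ! j))"
proof (induction k)
  case 0 then show ?case by simp
next
  case (Suc k)
  have "take (length (vs ! j) - k) (vs ! j) \<noteq> []" using Suc.prems by (cases "vs ! j") auto
  then show ?case using Suc by (simp add: butlast_take)
qed

lemma skel_term: "q \<in> skel vs \<Longrightarrow> \<exists>\<tau>. trm_vars \<tau> \<subseteq> {..<length vs} \<and> ev vs \<tau> = Some q"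
proof -
  assume "q \<in> skel vs"
  then consider "q = []" | v where "v \<in> set vs" "prefix q v" by (auto simp: skel_def)
  then show ?thesis
  proof cases
    case 1 then show ?thesis by (intro exI[of _ Root]) simp
  next
    case 2
    then obtain j where j: "j < length vs" "vs ! j = v" by (auto simp: in_set_conv_nth)
    have lq: "length q \<le> length v" using 2 prefix_length_le by blast
    have "q = take (length v - (length v - length q)) v" using 2 lq by (auto simp: prefix_def)
    then show ?thesis using ev_pars[OF j(1), of "length v - length q"] j trm_vars_pars
      by (intro exI[of _ "(Par ^^ (length v - length q)) (Var j)"]) simp
  qed
qed

locale setting =
  fixes R :: "'a rule set" and r :: 'a and l :: nat and \<phi> :: "'a qf" and t0 :: "'a ltree" and vs0 :: "nat list list"
  assumes qt: "qf_type (lang R r) l \<phi>" and t0: "t0 \<in> lang R r" and vs0: "vs0 \<in> tuples t0 l" and s0: "sat t0 vs0 \<phi>"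
begin

definition U where "U \<psi> = (\<forall>t\<in>lang R r. \<forall>vs\<in>tuples t l. sat t vs \<phi> \<longrightarrow> sat t vs \<psi>)"

lemma U_I: "qf_vars \<psi> \<subseteq> {..<l} \<Longrightarrow> sat t0 vs0 \<psi> \<Longrightarrow> U \<psi>"
  using qt t0 vs0 s0 unfolding qf_type_def U_def by blast

lemma len0: "length vs0 = l" using vs0 by (simp add: tuples_def)

inductive det :: "nat set \<Rightarrow> trm \<Rightarrow> bool" for X where
  dVar: "i \<in> X \<Longrightarrow> det X (Var i)"
| dRoot: "det X Root"
| dPar: "det X \<tau> \<Longrightarrow> det X (Par \<tau>)"
| dEq: "det X \<tau> \<Longrightarrow> U (Eq \<tau> \<sigma>) \<Longrightarrow> det X \<sigma>"
| dLeft: "det X (Par \<sigma>) \<Longrightarrow> U (LeftM \<sigma>) \<Longrightarrow> det X \<sigma>"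
| dRight: "det X (Par \<sigma>) \<Longrightarrow> U (RightM \<sigma>) \<Longrightarrow> det X \<sigma>"
| dSucc1: "det X \<tau> \<Longrightarrow> U (SibSucc \<tau> \<sigma>) \<Longrightarrow> det X \<sigma>"
| dSucc2: "det X \<tau> \<Longrightarrow> U (SibSucc \<sigma> \<tau>) \<Longrightarrow> det X \<sigma>"

lemma list_eq_bl: "q \<noteq> [] \<Longrightarrow> q' \<noteq> [] \<Longrightarrow> butlast q = butlast q' \<Longrightarrow> last q = last q' \<Longrightarrow> q = q'"
  by (metis append_butlast_last_id)

lemma ev_Par_eq: "ev vs (Par \<sigma>) = ev ws (Par \<sigma>) \<Longrightarrow> ev vs \<sigma> = Some q \<Longrightarrow> ev ws \<sigma> = Some q' \<Longrightarrow>
   (q = [] \<longleftrightarrow> q' = []) \<and> butlast q = butlast q'"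
  by (auto split: if_splits)

lemma det_sem:
  assumes "det X \<tau>" and X: "X \<subseteq> {..<l}" and t: "t \<in> lang R r"
    and vs: "vs \<in> sols t l \<phi>" and ws: "ws \<in> sols t l \<phi>" and agree: "\<forall>i\<in>X. vs ! i = ws ! i"
  shows "ev vs \<tau> = ev ws \<tau>"
  using assms(1)
proof induction
  case (dVar i)
  then show ?case using X vs ws agree by (auto simp: sols_def tuples_def)
next
  case dRoot then show ?case by simp
next
  case (dPar \<tau>) then show ?case by simp
next
  case (dEq \<tau> \<sigma>)
  have "sat t vs (Eq \<tau> \<sigma>)" "sat t ws (Eq \<tau> \<sigma>)" using \<open>U (Eq \<tau> \<sigma>)\<close> t vs ws by (auto simp: U_def sols_def)
  then obtain p p' where "ev vs \<tau> = Some p" "ev vs \<sigma> = Some p" "ev ws \<tau> = Some p'" "ev ws \<sigma> = Some p'"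
    by (auto split: option.splits)
  then show ?case using dEq.IH by simp
next
  case (dLeft \<sigma>)
  have "sat t vs (LeftM \<sigma>)" "sat t ws (LeftM \<sigma>)" using \<open>U (LeftM \<sigma>)\<close> t vs ws by (auto simp: U_def sols_def)
  then obtain q q' where q: "ev vs \<sigma> = Some q" "leftmost t q" "ev ws \<sigma> = Some q'" "leftmost t q'"
    by (auto split: option.splits)
  have e: "(q = [] \<longleftrightarrow> q' = []) \<and> butlast q = butlast q'" using ev_Par_eq[OF dLeft.IH q(1,3)] .
  have "q = q'"
  proof (cases "q = []")
    case True then show ?thesis using e by simp
  next
    case False then show ?thesis using e q(2,4) list_eq_bl[of q q'] by (simp add: leftmost_def)
  qed
  then show ?case using q by simp
next
  case (dRight \<sigma>)
  have "sat t vs (RightM \<sigma>)" "sat t ws (RightM \<sigma>)" using \<open>U (RightM \<sigma>)\<close> t vs ws by (auto simp: U_def sols_def)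
  then obtain q q' where q: "ev vs \<sigma> = Some q" "rightmost t q" "ev ws \<sigma> = Some q'" "rightmost t q'"
    by (auto split: option.splits)
  have e: "(q = [] \<longleftrightarrow> q' = []) \<and> butlast q = butlast q'" using ev_Par_eq[OF dRight.IH q(1,3)] .
  have "q = q'"
  proof (cases "q = []")
    case True then show ?thesis using e by simp
  next
    case False then show ?thesis using e q(2,4) list_eq_bl[of q q'] by (simp add: rightmost_def)
  qed
  then show ?case using q by simp
next
  case (dSucc1 \<tau> \<sigma>)
  have "sat t vs (SibSucc \<tau> \<sigma>)" "sat t ws (SibSucc \<tau> \<sigma>)" using \<open>U (SibSucc \<tau> \<sigma>)\<close> t vs ws by (auto simp: U_def sols_def)
  then obtain p q p' q' where q: "ev vs \<tau> = Some p" "ev vs \<sigma> = Some q" "sib_succ t p q"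
      "ev ws \<tau> = Some p'" "ev ws \<sigma> = Some q'" "sib_succ t p' q'"
    by (auto split: option.splits)
  have "p = p'" using q dSucc1.IH by simp
  then have "q = q'" using q(3,6) list_eq_bl[of q q'] by (simp add: sib_succ_def)
  then show ?case using q by simp
next
  case (dSucc2 \<tau> \<sigma>)
  have "sat t vs (SibSucc \<sigma> \<tau>)" "sat t ws (SibSucc \<sigma> \<tau>)" using \<open>U (SibSucc \<sigma> \<tau>)\<close> t vs ws by (auto simp: U_def sols_def)
  then obtain p q p' q' where q: "ev vs \<tau> = Some p" "ev vs \<sigma> = Some q" "sib_succ t q p"
      "ev ws \<tau> = Some p'" "ev ws \<sigma> = Some q'" "sib_succ t q' p'"
    by (auto split: option.splits)
  have "p = p'" using q dSucc2.IH by simp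
  then have "q = q'" using q(3,6) list_eq_bl[of q q'] by (simp add: sib_succ_def)
  then show ?case using q by simp
qed

lemma det_subst: "det X \<tau> \<Longrightarrow> (\<forall>i\<in>X. det Y (Var i)) \<Longrightarrow> det Y \<tau>"
  by (induction rule: det.induct) (auto intro: det.intros)

lemma det_pars: "det X \<tau> \<Longrightarrow> det X ((Par ^^ k) \<tau>)"
  by (induction k) (auto intro: dPar)

lemma choose_X: "\<exists>X. X \<subseteq> {..<l} \<and> (\<forall>i<l. det X (Var i)) \<and> (\<forall>i\<in>X. \<not> det (X - {i}) (Var i))"
proof -
  let ?P = "\<lambda>X. X \<subseteq> {..<l} \<and> (\<forall>i<l. det X (Var i))"
  have "?P {..<l}" by (auto intro: dVar)
  then obtain X where X: "?P X" and mn: "\<And>Y. ?P Y \<Longrightarrow> card X \<le> card Y"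
    using ex_has_least_nat[of ?P "{..<l}" card] by blast
  have "\<forall>i\<in>X. \<not> det (X - {i}) (Var i)"
  proof (intro ballI notI)
    fix i assume i: "i \<in> X" and d: "det (X - {i}) (Var i)"
    have all: "\<forall>k\<in>X. det (X - {i}) (Var k)" using d by (auto intro: dVar)
    have "?P (X - {i})" using X det_subst[OF _ all] by auto
    then have "card X \<le> card (X - {i})" by (rule mn)
    moreover have "finite X" using X finite_subset by blast
    moreover have "card X > 0" using \<open>finite X\<close> i card_gt_0_iff by blast
    ultimately show False using i by simp
  qed
  then show ?thesis using X by blast
qed

lemma ev_in_skel: "ev vs \<tau> = Some q \<Longrightarrow> q \<in> skel vs"
proof (induction \<tau> arbitrary: q)
  case (Var i) then show ?case by (auto simp: skel_entry split: if_splits)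
next
  case Root then show ?case by (simp add: skel_def)
next
  case (Par \<tau>) then show ?case by (auto split: option.splits if_splits intro: skel_butlast)
qed

lemma child_nch: "p @ [c] \<in> nodes t \<Longrightarrow> c < nchildren t p"
proof -
  assume "p @ [c] \<in> nodes t"
  then obtain s where s: "subt t p = Some s" "subt s [c] \<noteq> None" by (auto simp: nodes_def subt_append split: option.splits)
  obtain b cs where "s = Nd b cs" by (cases s)
  then show ?thesis using s by (auto simp: nchildren_def split: if_splits)
qed

lemma skel0_nodes: "q \<in> skel vs0 \<Longrightarrow> q \<in> nodes t0"
  using vs0 skel_nodes by (auto simp: tuples_def)

lemma skel0_term: "q \<in> skel vs0 \<Longrightarrow> \<exists>\<tau>. trm_vars \<tau> \<subseteq> {..<l} \<and> ev vs0 \<tau> = Some q"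
  using skel_term len0 by metis

lemma step_down: "\<not> P (0::nat) \<Longrightarrow> P L \<Longrightarrow> \<exists>e<L. \<not> P e \<and> P (Suc e)"
proof (induction L)
  case 0 then show ?case by simp
next
  case (Suc L) then show ?case by (cases "P L") (auto intro: less_SucI)
qed

end

locale interv = setting +
  fixes X :: "nat set" and i :: nat
  assumes Xl: "X \<subseteq> {..<l}" and Xdet: "\<forall>j<l. det X (Var j)" and iX: "i \<in> X" and ndi: "\<not> det (X - {i}) (Var i)"
begin

abbreviation "Z \<equiv> X - {i}"
definition nd where "nd q = (\<exists>\<tau>. trm_vars \<tau> \<subseteq> {..<l} \<and> ev vs0 \<tau> = Some q \<and> det Z \<tau>)"

lemma ndEq: "nd q \<Longrightarrow> trm_vars \<sigma> \<subseteq> {..<l} \<Longrightarrow> ev vs0 \<sigma> = Some q \<Longrightarrow> det Z \<sigma>"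
proof -
  assume "nd q" and s: "trm_vars \<sigma> \<subseteq> {..<l}" "ev vs0 \<sigma> = Some q"
  then obtain \<tau> where \<tau>: "trm_vars \<tau> \<subseteq> {..<l}" "ev vs0 \<tau> = Some q" "det Z \<tau>" by (auto simp: nd_def)
  have "U (Eq \<tau> \<sigma>)" by (rule U_I) (use s \<tau> in auto)
  then show ?thesis using dEq \<tau>(3) by blast
qed

lemma chain_right: "nd (p @ [c]) \<Longrightarrow> p @ [Suc c] \<in> skel vs0 \<Longrightarrow> nd (p @ [Suc c])"
proof -
  assume n: "nd (p @ [c])" and sk: "p @ [Suc c] \<in> skel vs0"
  then obtain \<tau> where \<tau>: "trm_vars \<tau> \<subseteq> {..<l}" "ev vs0 \<tau> = Some (p @ [c])" "det Z \<tau>" by (auto simp: nd_def)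
  obtain \<sigma> where \<sigma>: "trm_vars \<sigma> \<subseteq> {..<l}" "ev vs0 \<sigma> = Some (p @ [Suc c])" using skel0_term[OF sk] by blast
  have "p @ [c] \<in> nodes t0" using skel0_nodes ev_in_skel \<tau>(2) by blast
  moreover have "p @ [Suc c] \<in> nodes t0" using skel0_nodes sk by blast
  ultimately have "U (SibSucc \<tau> \<sigma>)" by (intro U_I) (use \<tau> \<sigma> in \<open>auto simp: sib_succ_def\<close>)
  then have "det Z \<sigma>" using dSucc1 \<tau>(3) by blast
  then show ?thesis using \<sigma> by (auto simp: nd_def)
qed

lemma chain_left: "nd (p @ [Suc c]) \<Longrightarrow> p @ [c] \<in> skel vs0 \<Longrightarrow> nd (p @ [c])"
proof -
  assume n: "nd (p @ [Suc c])" and sk: "p @ [c] \<in> skel vs0"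
  then obtain \<tau> where \<tau>: "trm_vars \<tau> \<subseteq> {..<l}" "ev vs0 \<tau> = Some (p @ [Suc c])" "det Z \<tau>" by (auto simp: nd_def)
  obtain \<sigma> where \<sigma>: "trm_vars \<sigma> \<subseteq> {..<l}" "ev vs0 \<sigma> = Some (p @ [c])" using skel0_term[OF sk] by blast
  have "p @ [Suc c] \<in> nodes t0" using skel0_nodes ev_in_skel \<tau>(2) by blast
  moreover have "p @ [c] \<in> nodes t0" using skel0_nodes sk by blast
  ultimately have "U (SibSucc \<sigma> \<tau>)" by (intro U_I) (use \<tau> \<sigma> in \<open>auto simp: sib_succ_def\<close>)
  then have "det Z \<sigma>" using dSucc2 \<tau>(3) by blast
  then show ?thesis using \<sigma> by (auto simp: nd_def)
qed

lemma il: "i < l" using iX Xl by blast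

lemma interval_exists:
  "\<exists>p lo G. 1 \<le> lo \<and> 1 \<le> G \<and> lo + G < nchildren t0 p \<and>
     (\<exists>c. lo \<le> c \<and> c < lo + G \<and> prefix (p @ [c]) (vs0 ! i)) \<and>
     p @ [lo - 1] \<notin> skel vs0 \<and> p @ [lo + G] \<notin> skel vs0 \<and>
     (\<forall>j c. j \<in> X \<longrightarrow> j \<noteq> i \<longrightarrow> lo \<le> c \<longrightarrow> c < lo + G \<longrightarrow> \<not> prefix (p @ [c]) (vs0 ! j)) \<and>
     (\<forall>c. lo \<le> c \<longrightarrow> c < lo + G \<longrightarrow> p @ [c] \<in> skel vs0)"
proof -
  define v where "v = vs0 ! i"
  define L where "L = length v"
  define pars where "pars k = (Par ^^ k) (Var i)" for k
  have il': "i < length vs0" using il len0 by simp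
  have pv: "\<And>k. trm_vars (pars k) \<subseteq> {..<l}" using il by (simp add: pars_def trm_vars_pars)
  have evp: "\<And>k. k \<le> L \<Longrightarrow> ev vs0 (pars k) = Some (take (L - k) v)"
    unfolding pars_def L_def v_def using ev_pars[OF il'] by blast
  have dL: "det Z (pars L)"
  proof -
    have "U (Eq Root (pars L))" by (rule U_I) (use pv evp[of L] in auto)
    then show ?thesis using dEq dRoot by blast
  qed
  have "\<not> det Z (pars 0)" using ndi by (simp add: pars_def)
  then obtain e where e: "e < L" "\<not> det Z (pars e)" "det Z (pars (Suc e))"
    using step_down[of "\<lambda>k. det Z (pars k)" L] dL by blast
  define g where "g = take (L - e) v"
  have gne: "g \<noteq> []" using e(1) by (cases v) (auto simp: g_def L_def)
  define p where "p = butlast g"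
  define c0 where "c0 = last g"
  have gpc: "g = p @ [c0]" using gne by (simp add: p_def c0_def)
  have evg: "ev vs0 (pars e) = Some g" using evp e(1) by (simp add: g_def)
  have evpp: "ev vs0 (pars (Suc e)) = Some p" using evp[of "Suc e"] e(1)
  proof -
    have "butlast (take (L - e) v) = take (L - e - 1) v" by (rule butlast_take) (simp add: L_def)
    then show ?thesis using evp[of "Suc e"] e(1) by (simp add: p_def g_def)
  qed
  have gpre: "prefix g v" by (simp add: g_def take_is_prefix)
  have ndp: "nd p" using evpp e(3) pv by (auto simp: nd_def)
  have not_nd_g: "\<not> nd g" using ndEq[OF _ pv evg] e(2) by blast
  have g_skel: "g \<in> skel vs0" using ev_in_skel evg by blast
  define lo where "lo = (LEAST a. \<forall>c. a \<le> c \<and> c \<le> c0 \<longrightarrow> p @ [c] \<in> skel vs0)"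
  define hi where "hi = (LEAST h. c0 \<le> h \<and> p @ [Suc h] \<notin> skel vs0)"
  have ex_lo: "\<forall>c. c0 \<le> c \<and> c \<le> c0 \<longrightarrow> p @ [c] \<in> skel vs0" using g_skel gpc by auto
  have lo1: "\<forall>c. lo \<le> c \<and> c \<le> c0 \<longrightarrow> p @ [c] \<in> skel vs0"
    unfolding lo_def by (rule LeastI[of _ c0]) (rule ex_lo)
  have lo2: "lo \<le> c0" unfolding lo_def by (rule Least_le) (rule ex_lo)
  have ex_hi: "c0 \<le> c0 + nchildren t0 p \<and> p @ [Suc (c0 + nchildren t0 p)] \<notin> skel vs0"
  proof -
    have "p @ [Suc (c0 + nchildren t0 p)] \<notin> skel vs0"
    proof
      assume "p @ [Suc (c0 + nchildren t0 p)] \<in> skel vs0"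
      then have "Suc (c0 + nchildren t0 p) < nchildren t0 p" using child_nch skel0_nodes by blast
      then show False by simp
    qed
    then show ?thesis by simp
  qed
  have hi1: "c0 \<le> hi \<and> p @ [Suc hi] \<notin> skel vs0"
    unfolding hi_def by (rule LeastI[of _ "c0 + nchildren t0 p"]) (rule ex_hi)
  have hi2: "\<forall>c. c0 \<le> c \<and> c \<le> hi \<longrightarrow> p @ [c] \<in> skel vs0"
  proof (intro allI impI)
    fix c assume c: "c0 \<le> c \<and> c \<le> hi"
    show "p @ [c] \<in> skel vs0"
    proof (cases "c = c0")
      case True then show ?thesis using g_skel gpc by simp
    next
      case False
      then have "c - 1 < hi" "c0 \<le> c - 1" using c by auto
      have "\<not> (c0 \<le> c - 1 \<and> p @ [Suc (c - 1)] \<notin> skel vs0)"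
        using not_less_Least[of "c - 1" "\<lambda>h. c0 \<le> h \<and> p @ [Suc h] \<notin> skel vs0"] \<open>c - 1 < hi\<close> unfolding hi_def by blast
      moreover have "Suc (c - 1) = c" using False c by simp
      ultimately show ?thesis using \<open>c0 \<le> c - 1\<close> by simp
    qed
  qed
  have run: "\<And>c. lo \<le> c \<Longrightarrow> c \<le> hi \<Longrightarrow> p @ [c] \<in> skel vs0"
    using lo1 hi2 by (case_tac "c \<le> c0") auto
  have lo3: "1 \<le> lo \<Longrightarrow> p @ [lo - 1] \<notin> skel vs0"
  proof
    assume l1: "1 \<le> lo" and sk: "p @ [lo - 1] \<in> skel vs0"
    have "\<forall>c. lo - 1 \<le> c \<and> c \<le> c0 \<longrightarrow> p @ [c] \<in> skel vs0"
    proof (intro allI impI)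
      fix c assume c: "lo - 1 \<le> c \<and> c \<le> c0"
      show "p @ [c] \<in> skel vs0"
      proof (cases "c = lo - 1")
        case True then show ?thesis using sk by simp
      next
        case False then have "lo \<le> c" using c l1 by linarith
        then show ?thesis using lo1 c by blast
      qed
    qed
    then have "lo \<le> lo - 1" unfolding lo_def by (rule Least_le)
    then show False using l1 by simp
  qed
  have no_nd: "\<And>c. lo \<le> c \<Longrightarrow> c \<le> hi \<Longrightarrow> \<not> nd (p @ [c])"
  proof
    fix c1 assume c1: "lo \<le> c1" "c1 \<le> hi" and n1: "nd (p @ [c1])"
    have "nd (p @ [c0])"
    proof (cases "c1 \<le> c0")
      case True
      have "\<And>d. d \<le> c0 - c1 \<Longrightarrow> nd (p @ [c1 + d])"
      proof -
        fix d show "d \<le> c0 - c1 \<Longrightarrow> nd (p @ [c1 + d])"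
        proof (induction d)
          case 0 then show ?case using n1 by simp
        next
          case (Suc d)
          have "Suc (c1 + d) \<le> hi" "lo \<le> Suc (c1 + d)" using Suc.prems c1 True lo2 hi1 by linarith+
          then have "p @ [Suc (c1 + d)] \<in> skel vs0" using run by blast
          then show ?case using chain_right[of p "c1 + d"] Suc by simp
        qed
      qed
      from this[of "c0 - c1"] show ?thesis using True by simp
    next
      case False
      have "\<And>d. d \<le> c1 - c0 \<Longrightarrow> nd (p @ [c1 - d])"
      proof -
        fix d show "d \<le> c1 - c0 \<Longrightarrow> nd (p @ [c1 - d])"
        proof (induction d)
          case 0 then show ?case using n1 by simp
        next
          case (Suc d)
          have "c1 - Suc d \<le> hi" "lo \<le> c1 - Suc d" using Suc.prems c1 False lo2 by linarith+
          then have sk: "p @ [c1 - Suc d] \<in> skel vs0" using run by blast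
          have "c1 - d = Suc (c1 - Suc d)" using Suc.prems False by simp
          then show ?case using chain_left[of p "c1 - Suc d"] Suc sk by simp
        qed
      qed
      from this[of "c1 - c0"] show ?thesis using False by simp
    qed
    then show False using not_nd_g gpc by simp
  qed
  have lo_pos: "1 \<le> lo"
  proof (rule ccontr)
    assume "\<not> 1 \<le> lo"
    then have lo0: "lo = 0" by simp
    have sk: "p @ [0] \<in> skel vs0" using run[of 0] lo0 lo2 hi1 by simp
    obtain \<tau> where \<tau>: "trm_vars \<tau> \<subseteq> {..<l}" "ev vs0 \<tau> = Some (p @ [0])" using skel0_term[OF sk] by blast
    have "ev vs0 (Par \<tau>) = Some p" using \<tau>(2) by simp
    then have dp: "det Z (Par \<tau>)" using ndEq[OF ndp] \<tau>(1) by simp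
    have "U (LeftM \<tau>)" by (rule U_I) (use \<tau> skel0_nodes[OF sk] in \<open>auto simp: leftmost_def\<close>)
    then have "det Z \<tau>" using dLeft dp by blast
    then have "nd (p @ [0])" using \<tau> by (auto simp: nd_def)
    then show False using no_nd[of 0] lo0 lo2 hi1 by simp
  qed
  have hi_lt: "Suc hi < nchildren t0 p"
  proof (rule ccontr)
    assume a: "\<not> Suc hi < nchildren t0 p"
    have sk: "p @ [hi] \<in> skel vs0" using run[of hi] lo2 hi1 by simp
    have "hi < nchildren t0 p" using child_nch skel0_nodes[OF sk] by blast
    then have hn: "Suc hi = nchildren t0 p" using a by simp
    obtain \<tau> where \<tau>: "trm_vars \<tau> \<subseteq> {..<l}" "ev vs0 \<tau> = Some (p @ [hi])" using skel0_term[OF sk] by blast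
    have "ev vs0 (Par \<tau>) = Some p" using \<tau>(2) by simp
    then have dp: "det Z (Par \<tau>)" using ndEq[OF ndp] \<tau>(1) by simp
    have "U (RightM \<tau>)" by (rule U_I) (use \<tau> skel0_nodes[OF sk] hn in \<open>auto simp: rightmost_def\<close>)
    then have "det Z \<tau>" using dRight dp by blast
    then have "nd (p @ [hi])" using \<tau> by (auto simp: nd_def)
    then show False using no_nd[of hi] lo2 hi1 by simp
  qed
  have I4: "\<forall>j c. j \<in> X \<longrightarrow> j \<noteq> i \<longrightarrow> lo \<le> c \<longrightarrow> c \<le> hi \<longrightarrow> \<not> prefix (p @ [c]) (vs0 ! j)"
  proof (intro allI impI notI)
    fix j c assume j: "j \<in> X" "j \<noteq> i" and c: "lo \<le> c" "c \<le> hi" and pr: "prefix (p @ [c]) (vs0 ! j)"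
    have jl: "j < length vs0" using j Xl len0 by auto
    define k where "k = length (vs0 ! j) - length (p @ [c])"
    have lk: "length (p @ [c]) \<le> length (vs0 ! j)" using pr prefix_length_le by blast
    have "ev vs0 ((Par ^^ k) (Var j)) = Some (take (length (vs0 ! j) - k) (vs0 ! j))"
      using ev_pars[OF jl] k_def by simp
    also have "take (length (vs0 ! j) - k) (vs0 ! j) = p @ [c]" using pr lk k_def by (auto simp: prefix_def)
    finally have ev: "ev vs0 ((Par ^^ k) (Var j)) = Some (p @ [c])" .
    have "det Z (Var j)" using j by (auto intro: dVar)
    then have "det Z ((Par ^^ k) (Var j))" by (rule det_pars)
    moreover have "trm_vars ((Par ^^ k) (Var j)) \<subseteq> {..<l}" using j Xl by (auto simp: trm_vars_pars)
    ultimately have "nd (p @ [c])" using ev by (auto simp: nd_def)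
    then show False using no_nd c by blast
  qed
  have e1: "lo + (Suc hi - lo) = Suc hi" using lo2 hi1 by linarith
  show ?thesis
  proof (rule exI[of _ p], rule exI[of _ lo], rule exI[of _ "Suc hi - lo"], intro conjI)
    show "1 \<le> lo" by (rule lo_pos)
    show "1 \<le> Suc hi - lo" using lo2 hi1 by linarith
    show "lo + (Suc hi - lo) < nchildren t0 p" using hi_lt e1 by simp
    show "\<exists>c. lo \<le> c \<and> c < lo + (Suc hi - lo) \<and> prefix (p @ [c]) (vs0 ! i)" unfolding e1
      using lo2 hi1 gpre gpc v_def by (intro exI[of _ c0]) simp
    show "p @ [lo - 1] \<notin> skel vs0" using lo3 lo_pos by blast
    show "p @ [lo + (Suc hi - lo)] \<notin> skel vs0" using hi1 e1 by simp
    show "\<forall>j c. j \<in> X \<longrightarrow> j \<noteq> i \<longrightarrow> lo \<le> c \<longrightarrow> c < lo + (Suc hi - lo) \<longrightarrow> \<not> prefix (p @ [c]) (vs0 ! j)"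
      using I4 lo2 hi1 e1 by auto
    show "\<forall>c. lo \<le> c \<longrightarrow> c < lo + (Suc hi - lo) \<longrightarrow> p @ [c] \<in> skel vs0" unfolding e1
      using run lo2 hi1 by auto
  qed
qed

end


lemma nsz_pos: "1 \<le> nsz t" by (cases t) auto

lemma finite_sols: "finite (sols t l \<phi>)"
proof -
  have "sols t l \<phi> \<subseteq> {xs. set xs \<subseteq> nodes t \<and> length xs = l}" by (auto simp: sols_def tuples_def)
  then show ?thesis using finite_lists_length_eq[OF finite_nodes] finite_subset by blast
qed

lemma card_sols_bound:
  assumes uniq: "\<forall>vs\<in>sols t l \<phi>. \<forall>ws\<in>sols t l \<phi>. (\<forall>i\<in>X. vs ! i = ws ! i) \<longrightarrow> vs = ws"
    and Xl: "X \<subseteq> {..<l}"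
  shows "card (sols t l \<phi>) \<le> card (nodes t) ^ card X"
proof -
  have finX: "finite X" using Xl finite_subset by blast
  define f where "f vs = map (\<lambda>i. vs ! i) (sorted_list_of_set X)" for vs :: "nat list list"
  have inj: "inj_on f (sols t l \<phi>)"
  proof (rule inj_onI)
    fix vs ws assume a: "vs \<in> sols t l \<phi>" "ws \<in> sols t l \<phi>" "f vs = f ws"
    then have "\<forall>i\<in>X. vs ! i = ws ! i" using finX by (auto simp: f_def map_eq_conv)
    then show "vs = ws" using uniq a by blast
  qed
  have sub: "f ` sols t l \<phi> \<subseteq> {xs. set xs \<subseteq> nodes t \<and> length xs = card X}"
  proof
    fix xs assume "xs \<in> f ` sols t l \<phi>"
    then obtain vs where vs: "vs \<in> sols t l \<phi>" "xs = f vs" by blast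
    have "set xs \<subseteq> nodes t"
    proof
      fix q assume "q \<in> set xs"
      then obtain i where i: "i \<in> X" "q = vs ! i" using vs finX by (auto simp: f_def)
      have "i < length vs" "set vs \<subseteq> nodes t" using vs i Xl by (auto simp: sols_def tuples_def)
      then show "q \<in> nodes t" using i nth_mem by blast
    qed
    moreover have "length xs = card X" using vs finX by (simp add: f_def)
    ultimately show "xs \<in> {xs. set xs \<subseteq> nodes t \<and> length xs = card X}" by simp
  qed
  have "card (sols t l \<phi>) = card (f ` sols t l \<phi>)" using card_image[OF inj] by simp
  also have "\<dots> \<le> card {xs. set xs \<subseteq> nodes t \<and> length xs = card X}"
    by (rule card_mono[OF finite_lists_length_eq[OF finite_nodes] sub])
  also have "\<dots> = card (nodes t) ^ card X" by (rule card_lists_length_eq[OF finite_nodes])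
  finally show ?thesis .
qed

lemma growth_set_cases: "x \<in> insert 0 {card (sols t l \<phi>) | t. t \<in> T \<and> card (nodes t) \<le> n} \<Longrightarrow>
   x = 0 \<or> (\<exists>t. t \<in> T \<and> card (nodes t) \<le> n \<and> x = card (sols t l \<phi>))"
  by blast

lemma growth_upper:
  assumes b: "\<And>t. t \<in> T \<Longrightarrow> card (sols t l \<phi>) \<le> card (nodes t) ^ k"
  shows "growth T l \<phi> n \<le> n ^ k"
proof -
  let ?S = "insert 0 {card (sols t l \<phi>) | t. t \<in> T \<and> card (nodes t) \<le> n}"
  have sub: "\<And>x. x \<in> ?S \<Longrightarrow> x \<le> n ^ k"
  proof -
    fix x assume "x \<in> ?S"
    then have "x = 0 \<or> (\<exists>t. t \<in> T \<and> card (nodes t) \<le> n \<and> x = card (sols t l \<phi>))" by (rule growth_set_cases)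
    then show "x \<le> n ^ k"
    proof
      assume "\<exists>t. t \<in> T \<and> card (nodes t) \<le> n \<and> x = card (sols t l \<phi>)"
      then obtain t where t: "t \<in> T" "card (nodes t) \<le> n" "x = card (sols t l \<phi>)" by blast
      have "x \<le> card (nodes t) ^ k" using b[OF t(1)] t(3) by simp
      also have "\<dots> \<le> n ^ k" using t(2) by (rule power_mono) simp
      finally show ?thesis .
    qed simp
  qed
  have "?S \<subseteq> {..n ^ k}"
  proof (rule subsetI)
    fix x assume "x \<in> ?S"
    from sub[OF this] show "x \<in> {..n ^ k}" by (simp only: atMost_iff)
  qed
  then have fin: "finite ?S" by (rule finite_subset) simp
  have ne: "?S \<noteq> {}" by (rule insert_not_empty)
  show ?thesis unfolding growth_def by (rule Max.boundedI[OF fin ne sub])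
qed

lemma growth_lower:
  assumes "t \<in> T" "card (nodes t) \<le> n"
  shows "card (sols t l \<phi>) \<le> growth T l \<phi> n"
proof -
  let ?S = "insert 0 {card (sols t l \<phi>) | t. t \<in> T \<and> card (nodes t) \<le> n}"
  have fin: "finite ?S"
  proof -
    have "?S \<subseteq> {..n ^ l}"
    proof
      fix x assume "x \<in> ?S"
      then have "x = 0 \<or> (\<exists>t. t \<in> T \<and> card (nodes t) \<le> n \<and> x = card (sols t l \<phi>))" by (rule growth_set_cases)
      then show "x \<in> {..n ^ l}"
      proof
        assume "\<exists>t. t \<in> T \<and> card (nodes t) \<le> n \<and> x = card (sols t l \<phi>)"
        then obtain t where 2: "t \<in> T" "card (nodes t) \<le> n" "x = card (sols t l \<phi>)" by (elim exE conjE)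
        have u: "\<forall>vs\<in>sols t l \<phi>. \<forall>ws\<in>sols t l \<phi>. (\<forall>i\<in>{..<l}. vs ! i = ws ! i) \<longrightarrow> vs = ws"
          by (auto simp: sols_def tuples_def intro!: nth_equalityI)
        have "x \<le> card (nodes t) ^ card {..<l}"
          using card_sols_bound[OF u] 2 by simp
        then have "x \<le> card (nodes t) ^ l" by simp
        also have "\<dots> \<le> n ^ l" using 2(2) by (rule power_mono) simp
        finally show ?thesis by simp
      qed simp
    qed
    then show ?thesis by (rule finite_subset) simp
  qed
  have "card (sols t l \<phi>) \<in> ?S" using assms by (intro insertI2 CollectI exI[of _ t]) simp
  then show ?thesis unfolding growth_def by (rule Max_ge[OF fin])
qed


theorem mainTheorem7:
  fixes \<Sigma> :: "'a set" and r :: 'a and R :: "'a rule set" and l :: nat and \<phi> :: "'a qf"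
  assumes "tree_grammar \<Sigma> r R"
    and "qf_type (lang R r) l \<phi>"
    and "\<exists>t\<in>lang R r. \<exists>vs\<in>tuples t l. sat t vs \<phi>"
  shows "\<exists>X \<subseteq> {..<l}.
     (\<forall>t\<in>lang R r. \<forall>vs\<in>sols t l \<phi>. \<forall>ws\<in>sols t l \<phi>.
         (\<forall>i\<in>X. vs ! i = ws ! i) \<longrightarrow> vs = ws) \<and>
     (\<lambda>n. real (growth (lang R r) l \<phi> n)) \<in> \<Theta>(\<lambda>n. real n ^ card X)"
proof -
  obtain t0 vs0 where t0: "t0 \<in> lang R r" and vs0: "vs0 \<in> tuples t0 l" and s0: "sat t0 vs0 \<phi>"
    using assms(3) by blast
  interpret st: setting R r l \<phi> t0 vs0 by unfold_locales (use assms(2) t0 vs0 s0 in auto)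
  obtain X where Xl: "X \<subseteq> {..<l}" and Xd: "\<forall>i<l. st.det X (Var i)" and Xm: "\<forall>i\<in>X. \<not> st.det (X - {i}) (Var i)"
    using st.choose_X by blast
  have uniq: "\<forall>t\<in>lang R r. \<forall>vs\<in>sols t l \<phi>. \<forall>ws\<in>sols t l \<phi>. (\<forall>i\<in>X. vs ! i = ws ! i) \<longrightarrow> vs = ws"
  proof (intro ballI impI)
    fix t vs ws assume t: "t \<in> lang R r" and vs: "vs \<in> sols t l \<phi>" and ws: "ws \<in> sols t l \<phi>" and ag: "\<forall>i\<in>X. vs ! i = ws ! i"
    have lv: "length vs = l" "length ws = l" using vs ws by (auto simp: sols_def tuples_def)
    have "\<And>i. i < l \<Longrightarrow> vs ! i = ws ! i"
    proof -
      fix i assume i: "i < l"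
      have "ev vs (Var i) = ev ws (Var i)" using st.det_sem[OF _ Xl t vs ws ag] Xd i by blast
      then show "vs ! i = ws ! i" using i lv by simp
    qed
    then show "vs = ws" using lv by (intro nth_equalityI) auto
  qed
  have ex: "\<forall>i\<in>X. \<exists>x. (case x of (p, lo, G) \<Rightarrow> 1 \<le> lo \<and> 1 \<le> G \<and> lo + G < nchildren t0 p \<and>
     (\<exists>c. lo \<le> c \<and> c < lo + G \<and> prefix (p @ [c]) (vs0 ! i)) \<and>
     p @ [lo - 1] \<notin> skel vs0 \<and> p @ [lo + G] \<notin> skel vs0 \<and>
     (\<forall>j c. j \<in> X \<longrightarrow> j \<noteq> i \<longrightarrow> lo \<le> c \<longrightarrow> c < lo + G \<longrightarrow> \<not> prefix (p @ [c]) (vs0 ! j)) \<and>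
     (\<forall>c. lo \<le> c \<longrightarrow> c < lo + G \<longrightarrow> p @ [c] \<in> skel vs0))"
  proof
    fix i assume i: "i \<in> X"
    interpret iv: interv R r l \<phi> t0 vs0 X i by unfold_locales (use Xl Xd Xm i in auto)
    from iv.interval_exists show "\<exists>x. (case x of (p, lo, G) \<Rightarrow> 1 \<le> lo \<and> 1 \<le> G \<and> lo + G < nchildren t0 p \<and>
     (\<exists>c. lo \<le> c \<and> c < lo + G \<and> prefix (p @ [c]) (vs0 ! i)) \<and>
     p @ [lo - 1] \<notin> skel vs0 \<and> p @ [lo + G] \<notin> skel vs0 \<and>
     (\<forall>j c. j \<in> X \<longrightarrow> j \<noteq> i \<longrightarrow> lo \<le> c \<longrightarrow> c < lo + G \<longrightarrow> \<not> prefix (p @ [c]) (vs0 ! j)) \<and>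
     (\<forall>c. lo \<le> c \<longrightarrow> c < lo + G \<longrightarrow> p @ [c] \<in> skel vs0))"
      apply (elim exE)
      subgoal for p lo G by (rule exI[of _ "(p, lo, G)"], unfold prod.case, assumption)
      done
  qed
  then obtain f where f: "\<forall>i\<in>X. (case f i of (p, lo, G) \<Rightarrow> 1 \<le> lo \<and> 1 \<le> G \<and> lo + G < nchildren t0 p \<and>
     (\<exists>c. lo \<le> c \<and> c < lo + G \<and> prefix (p @ [c]) (vs0 ! i)) \<and>
     p @ [lo - 1] \<notin> skel vs0 \<and> p @ [lo + G] \<notin> skel vs0 \<and>
     (\<forall>j c. j \<in> X \<longrightarrow> j \<noteq> i \<longrightarrow> lo \<le> c \<longrightarrow> c < lo + G \<longrightarrow> \<not> prefix (p @ [c]) (vs0 ! j)) \<and>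
     (\<forall>c. lo \<le> c \<longrightarrow> c < lo + G \<longrightarrow> p @ [c] \<in> skel vs0))"
    by (rule bchoice[THEN exE]) blast
  define P where "P i = fst (f i)" for i
  define A where "A i = fst (snd (f i))" for i
  define G where "G i = snd (snd (f i))" for i
  have fPAG: "\<And>i. f i = (P i, A i, G i)" by (simp add: P_def A_def G_def)
  have f': "\<And>i. i \<in> X \<Longrightarrow> 1 \<le> A i \<and> 1 \<le> G i \<and> A i + G i < nchildren t0 (P i) \<and>
     (\<exists>c. A i \<le> c \<and> c < A i + G i \<and> prefix (P i @ [c]) (vs0 ! i)) \<and>
     P i @ [A i - 1] \<notin> skel vs0 \<and> P i @ [A i + G i] \<notin> skel vs0 \<and>
     (\<forall>j c. j \<in> X \<longrightarrow> j \<noteq> i \<longrightarrow> A i \<le> c \<longrightarrow> c < A i + G i \<longrightarrow> \<not> prefix (P i @ [c]) (vs0 ! j)) \<and>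
     (\<forall>c. A i \<le> c \<longrightarrow> c < A i + G i \<longrightarrow> P i @ [c] \<in> skel vs0)"
  proof -
    fix i assume "i \<in> X"
    then have "case f i of (p, lo, G) \<Rightarrow> 1 \<le> lo \<and> 1 \<le> G \<and> lo + G < nchildren t0 p \<and>
     (\<exists>c. lo \<le> c \<and> c < lo + G \<and> prefix (p @ [c]) (vs0 ! i)) \<and>
     p @ [lo - 1] \<notin> skel vs0 \<and> p @ [lo + G] \<notin> skel vs0 \<and>
     (\<forall>j c. j \<in> X \<longrightarrow> j \<noteq> i \<longrightarrow> lo \<le> c \<longrightarrow> c < lo + G \<longrightarrow> \<not> prefix (p @ [c]) (vs0 ! j)) \<and>
     (\<forall>c. lo \<le> c \<longrightarrow> c < lo + G \<longrightarrow> p @ [c] \<in> skel vs0)" by (rule bspec[OF f])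
    then show "?thesis i" unfolding fPAG prod.case .
  qed
  have finX: "finite X" using Xl finite_subset by blast
  interpret it: iter R r t0 l \<phi> vs0 X P A G
  proof
    show "t0 \<in> lang R r" by (rule t0)
    show "vs0 \<in> sols t0 l \<phi>" using vs0 s0 by (simp add: sols_def)
    show "finite X" by (rule finX)
    show "X \<subseteq> {..<l}" by (rule Xl)
  next
    fix i assume i: "i \<in> X"
    show "1 \<le> A i \<and> 1 \<le> G i \<and> A i + G i < nchildren t0 (P i)" using f'[OF i] by (elim conjE) (intro conjI)
  next
    fix i assume i: "i \<in> X"
    show "\<exists>c. A i \<le> c \<and> c < A i + G i \<and> prefix (P i @ [c]) (vs0 ! i)" using f'[OF i] by (elim conjE)
  next
    fix i assume i: "i \<in> X"
    show "P i @ [A i - 1] \<notin> skel vs0 \<and> P i @ [A i + G i] \<notin> skel vs0" using f'[OF i] by (elim conjE) (intro conjI)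
  next
    fix i j c assume i: "i \<in> X" and j: "j \<in> X" "j \<noteq> i" and c: "A i \<le> c" "c < A i + G i"
    have "\<forall>j c. j \<in> X \<longrightarrow> j \<noteq> i \<longrightarrow> A i \<le> c \<longrightarrow> c < A i + G i \<longrightarrow> \<not> prefix (P i @ [c]) (vs0 ! j)"
      using f'[OF i] by (elim conjE)
    then show "\<not> prefix (P i @ [c]) (vs0 ! j)" using j c by simp
  next
    fix i c assume i: "i \<in> X" and c: "A i \<le> c" "c < A i + G i"
    have "\<forall>c. A i \<le> c \<longrightarrow> c < A i + G i \<longrightarrow> P i @ [c] \<in> skel vs0"
      using f'[OF i] by (elim conjE)
    then show "P i @ [c] \<in> skel vs0" using c by simp
  qed
  define k where "k = card X"
  define N0 where "N0 = nsz t0"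
  define C where "C = N0 * (k + 1)"
  have N0: "1 \<le> N0" unfolding N0_def by (rule nsz_pos)
  have C1: "1 \<le> C" unfolding C_def using N0 by simp
  have up: "\<And>n. growth (lang R r) l \<phi> n \<le> n ^ k"
    unfolding k_def by (rule growth_upper) (use card_sols_bound uniq Xl in blast)
  have low: "\<And>n. C \<le> n \<Longrightarrow> (1 / (2 * real C)) ^ k * real n ^ k \<le> real (growth (lang R r) l \<phi> n)"
  proof -
    fix n assume n: "C \<le> n"
    define m where "m = n div C"
    have "C div C \<le> n div C" using n by (rule div_le_mono)
    then have m1: "1 \<le> m" unfolding m_def using C1 by simp
    obtain t' F' where tf: "t' \<in> lang R r" "F' \<subseteq> sols t' l \<phi>" "card F' = m ^ card X"
        "nsz t' \<le> nsz t0 + card X * m * nsz t0"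
      using it.lower_family[OF m1] by blast
    have mC: "m * C \<le> n" unfolding m_def by (rule div_times_less_eq_dividend)
    have "nsz t' \<le> m * C"
    proof -
      have "N0 + k * m * N0 \<le> m * N0 + k * m * N0" using m1 by simp
      also have "\<dots> = m * C" by (simp add: C_def algebra_simps)
      finally show ?thesis using tf(4) by (simp add: N0_def k_def)
    qed
    then have "card (nodes t') \<le> n" using mC by (simp add: card_nodes)
    then have "card (sols t' l \<phi>) \<le> growth (lang R r) l \<phi> n" by (rule growth_lower[OF tf(1)])
    moreover have "m ^ k \<le> card (sols t' l \<phi>)" using card_mono[OF finite_sols tf(2)] tf(3) by (simp add: k_def)
    ultimately have g: "m ^ k \<le> growth (lang R r) l \<phi> n" by linarith
    have nm: "n = m * C + n mod C" unfolding m_def by simp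
    have "n mod C < C" using C1 by simp
    then have "n < m * C + C" using nm by linarith
    also have "\<dots> \<le> 2 * m * C" using m1 by simp
    finally have "real n \<le> 2 * real m * real C" by (metis of_nat_le_iff of_nat_mult of_nat_numeral less_imp_le)
    then have "real n / (2 * real C) \<le> real m" using C1 by (simp add: divide_le_eq mult.commute mult.left_commute)
    then have "(real n / (2 * real C)) ^ k \<le> real m ^ k" by (rule power_mono) simp
    also have "\<dots> \<le> real (growth (lang R r) l \<phi> n)" using g by (metis of_nat_le_iff of_nat_power)
    finally show "(1 / (2 * real C)) ^ k * real n ^ k \<le> real (growth (lang R r) l \<phi> n)"
      by (simp add: power_divide power_mult_distrib)
  qed
  have "(\<lambda>n. real (growth (lang R r) l \<phi> n)) \<in> \<Theta>(\<lambda>n. real n ^ k)"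
  proof (rule bigthetaI'[of "(1 / (2 * real C)) ^ k" 1])
    show "0 < (1 / (2 * real C)) ^ k" using C1 by simp
    show "(0::real) < 1" by simp
    show "\<forall>\<^sub>F n in at_top. (1 / (2 * real C)) ^ k * norm (real n ^ k) \<le> norm (real (growth (lang R r) l \<phi> n)) \<and>
        norm (real (growth (lang R r) l \<phi> n)) \<le> 1 * norm (real n ^ k)"
    proof (rule eventually_at_top_linorderI[of C])
      fix n assume n: "C \<le> n"
      have "real (growth (lang R r) l \<phi> n) \<le> real n ^ k" using up[of n] by (metis of_nat_le_iff of_nat_power)
      then show "(1 / (2 * real C)) ^ k * norm (real n ^ k) \<le> norm (real (growth (lang R r) l \<phi> n)) \<and>
        norm (real (growth (lang R r) l \<phi> n)) \<le> 1 * norm (real n ^ k)"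
        using low[OF n] by simp
    qed
  qed
  then show ?thesis using Xl uniq unfolding k_def by blast
qed


end
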